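(* Let $(D,\chi)$ be a shaped oriented link diagram, and let $\mathfrak f,\mathfrak f'$ be two flattenings of $(D,\chi)$ (in the sense of the context). For each component $j$ of $D$ let $(\mu_j,\lambda_j)=(\mathfrak s(\mathfrak m_j),\mathfrak s(\mathfrak l_j))$ and $(\mu_j',\lambda_j')=(\mathfrak s'(\mathfrak m_j),\mathfrak s'(\mathfrak l_j))$ be the induced log-decoration values of $\mathfrak f$ and $\mathfrak f'$, and put $\Delta\mu_j=\mu_j'-\mu_j$, $\Delta\lambda_j=\lambda_j'-\lambda_j$ (these are integers). Then \[ \mathcal V(D,\chi,\mathfrak f')-\mathcal V(D,\chi,\mathfrak f)\equiv 4\pi^2 i\sum_j\big(\Delta\lambda_j\,\mu_j-\Delta\mu_j\,\lambda_j\big)\pmod{2\pi^2 i\mathbb Z}, \] the sum running over the components of $D$. In particular $\mathcal V(D,\chi,\mathfrak f)$ depends on the flattening $\mathfrak f$ only through its induced log-decoration values $(\mu_j,\lambda_j)_j$.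
   Context: Oriented link diagram $D$ in the plane; segments are the edges of its underlying $4$-valent planar graph, regions are the components of the complement of that graph. At each crossing $c$, rotate so both strands point right; label incoming upper-left segment $1$, incoming lower-left segment $2$, outgoing lower-right segment $1'$ (continuation of $1$), outgoing upper-right segment $2'$ (continuation of $2$); regions $N$ (top, between $1$ and $2'$), $S$ (bottom, between $2$ and $1'$), $W$ (left, between $1$ and $2$), $E$ (right, between $2'$ and $1'$); $\epsilon=\pm1$ is the sign of the crossing. Shaping: assign $\chi_i=(a_i,b_i,m_i)\in(\mathbb C^\times)^3$ to each segment so that $m$ is constant along each component and at each crossing: if positive, with $A=1-\frac{m_1b_1}{b_2}(1-\frac{a_1}{m_1})(1-\frac{1}{m_2a_2})$, $a_{1'}=a_1/A$, $a_{2'}=a_2A$, $b_{1'}=\frac{m_2b_2}{m_1}(1-m_2a_2(1-\frac{b_2}{m_1b_1}))^{-1}$, $b_{2'}=b_1(1-\frac{m_1}{a_1}(1-\frac{b_2}{m_1b_1}))$; if negative, with $\tilde A=1-\frac{b_2}{m_1b_1}(1-m_1a_1)(1-\frac{m_2}{a_2})$, $a_{1'}=a_1/\tilde A$, $a_{2'}=a_2\tilde A$, $b_{1'}=\frac{m_2b_2}{m_1}(1-\frac{a_2}{m_2}(1-\frac{m_1b_1}{b_2}))$, $b_{2'}=b_1(1-\frac{1}{m_1a_1}(1-\frac{m_1b_1}{b_2}))^{-1}$; all values finite and nonzero. A crossing is pinched if $b_{2'}=b_1$ (equivalently $b_2=m_1b_1$, $m_2b_2=m_1b_{1'}$, $m_2b_{2'}=b_{1'}$).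 Flattening $\mathfrak f$: numbers $\mu_j$ per component with $e^{2\pi i\mu_j}=m_j$; $\beta_k$ per segment with $e^{2\pi i\beta_k}=b_k$; $\gamma_R$ per region with $e^{2\pi i(\gamma_{R'}-\gamma_{R})}=a_k$ whenever regions $R'$ and $R$ lie respectively to the right and left of segment $k$ (relative to its orientation); and at each non-pinched crossing a number $\kappa$ with $e^{2\pi i\kappa}=K:=e^{2\pi i\gamma_N}/(1-(b_{2'}/b_1)^\epsilon)$. Lifted dilogarithm: for $(\zeta^0,\zeta^1)\in\mathbb C^2$ with $w=e^{\zeta^0}\neq1$ and $e^{\zeta^1}(1-w)=1$, set $p^0=(\zeta^0-\operatorname{Log}w)/2\pi i$, $p^1=(\zeta^1+\operatorname{Log}(1-w))/2\pi i\in\mathbb Z$ (principal Log, argument in $(-\pi,\pi]$) and $\mathcal L(\zeta^0,\zeta^1)=R(w)-\frac{\pi^2}{6}+\pi i\,(p^0\operatorname{Log}(1-w)+p^1\operatorname{Log}w)\in\mathbb C/2\pi^2\mathbb Z$, where $R(w)=\operatorname{Li}_2(w)+\frac12\operatorname{Log}w\operatorname{Log}(1-w)$, $\operatorname{Li}_2(w)=-\int_0^w\frac{\log(1-t)}{t}dt$; $\mathcal L$ is understood as the continuous extension of this expression. Crossing volume: at a non-pinched crossing set $\zeta_N^0=2\pi i\epsilon(\beta_{2'}-\beta_1)$, $\zeta_N^1=2\pi i(\kappa-\gamma_N)$; $\zeta_W^0=2\pi i\epsilon(\beta_2-\beta_1-\mu_1)$, $\zeta_W^1=2\pi i(\kappa-\gamma_W+\epsilon\mu_1)$;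 $\zeta_S^0=2\pi i\epsilon(\beta_2-\beta_{1'}+\mu_2-\mu_1)$, $\zeta_S^1=2\pi i(\kappa-\gamma_S+\epsilon(\mu_1-\mu_2))$; $\zeta_E^0=2\pi i\epsilon(\beta_{2'}-\beta_{1'}+\mu_2)$, $\zeta_E^1=2\pi i(\kappa-\gamma_E-\epsilon\mu_2)$ (here $\mu_1,\mu_2$ are the parameters of the components containing strands $1,2$); these satisfy the conditions for $\mathcal L$, and $\mathcal V(c,\mathfrak f)=-i\epsilon[\mathcal L(\zeta_N^0,\zeta_N^1)-\mathcal L(\zeta_W^0,\zeta_W^1)+\mathcal L(\zeta_S^0,\zeta_S^1)-\mathcal L(\zeta_E^0,\zeta_E^1)]$. At a pinched crossing $\mathcal V(c,\mathfrak f)=2\pi^2 i[\beta_1(\gamma_W-\gamma_N)-\beta_{1'}(\gamma_S-\gamma_E)+\beta_2(\gamma_S-\gamma_W)-\beta_{2'}(\gamma_E-\gamma_N)-\mu_1(\epsilon(\beta_1-\beta_{1'}+\mu_2)+\gamma_S-\gamma_W)-\mu_2(\epsilon(\beta_{2'}-\beta_2+\mu_1)+\gamma_E-\gamma_S)]$. The diagram volume is $\mathcal V(D,\chi,\mathfrak f)=\sum_c\mathcal V(c,\mathfrak f)\in\mathbb C/2\pi^2 i\mathbb Z$. Induced log-decoration: for component $j$, $\mathfrak s(\mathfrak m_j)=\mu_j$ and $\mathfrak s(\mathfrak l_j)=-w_j\mu_j+\sum_k\eta_k\beta_k$, where $w_j$ is the writhe of component $j$ (sum of signs of crossings both of whose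 strands lie in component $j$), the sum runs over segments $k$ of component $j$, and $\eta_k=1$ if segment $k$ is over-under (overstrand at its initial crossing, understrand at its terminal crossing), $\eta_k=-1$ if it is under-over, and $\eta_k=0$ otherwise. *)

theory Defs
  imports "HOL-Analysis.Analysis"
begin

text \<open>At a crossing c (rotated so that both strands point right):
  s1 c = incoming upper-left segment 1, s2 c = incoming lower-left segment 2,
  s1o c = outgoing lower-right segment 1' (continuation of 1),
  s2o c = outgoing upper-right segment 2' (continuation of 2);
  regions rN (top), rS (bottom), rW (left), rE (right); sgn c = crossing sign.
  comp k = link component containing segment k; lreg k / rreg k = regions to the
  left / right of segment k relative to its orientation.\<close>

record ('c, 's, 'r, 'j) link_diagram =
  crossings :: "'c set"
  segs :: "'s set"
  regs :: "'r set"
  comps :: "'j set"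
  sgn :: "'c \<Rightarrow> int"
  s1 :: "'c \<Rightarrow> 's"
  s2 :: "'c \<Rightarrow> 's"
  s1o :: "'c \<Rightarrow> 's"
  s2o :: "'c \<Rightarrow> 's"
  rN :: "'c \<Rightarrow> 'r"
  rS :: "'c \<Rightarrow> 'r"
  rW :: "'c \<Rightarrow> 'r"
  rE :: "'c \<Rightarrow> 'r"
  comp :: "'s \<Rightarrow> 'j"
  lreg :: "'s \<Rightarrow> 'r"
  rreg :: "'s \<Rightarrow> 'r"

definition strand_step :: "('c, 's, 'r, 'j) link_diagram \<Rightarrow> ('s \<times> 's) set" where
  "strand_step D = {(s1 D c, s1o D c) | c. c \<in> crossings D}
                 \<union> {(s2 D c, s2o D c) | c. c \<in> crossings D}"

definition link_diagram_wf :: "('c, 's, 'r, 'j) link_diagram \<Rightarrow> bool" where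
  "link_diagram_wf D \<longleftrightarrow>
     finite (crossings D) \<and> finite (segs D) \<and> finite (regs D) \<and>
     (\<forall>c\<in>crossings D.
        sgn D c \<in> {1, -1} \<and>
        s1 D c \<in> segs D \<and> s2 D c \<in> segs D \<and> s1o D c \<in> segs D \<and> s2o D c \<in> segs D \<and>
        rN D c \<in> regs D \<and> rS D c \<in> regs D \<and> rW D c \<in> regs D \<and> rE D c \<in> regs D \<and>
        comp D (s1 D c) = comp D (s1o D c) \<and> comp D (s2 D c) = comp D (s2o D c) \<and>
        lreg D (s1 D c) = rN D c \<and> rreg D (s1 D c) = rW D c \<and>
        lreg D (s2 D c) = rW D c \<and> rreg D (s2 D c) = rS D c \<and>
        lreg D (s1o D c) = rE D c \<and> rreg D (s1o D c) = rS D c \<and>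
        lreg D (s2o D c) = rN D c \<and> rreg D (s2o D c) = rE D c) \<and>
     (\<forall>k\<in>segs D. lreg D k \<in> regs D \<and> rreg D k \<in> regs D) \<and>
     bij_betw (\<lambda>(c, t). if t then s1 D c else s2 D c) (crossings D \<times> (UNIV :: bool set)) (segs D) \<and>
     bij_betw (\<lambda>(c, t). if t then s1o D c else s2o D c) (crossings D \<times> (UNIV :: bool set)) (segs D) \<and>
     comps D = comp D ` segs D \<and>
     (\<forall>k\<in>segs D. \<forall>k'\<in>segs D. comp D k = comp D k' \<longleftrightarrow> (k, k') \<in> (strand_step D)\<^sup>*)"

definition crossing_eqs :: "int \<Rightarrow> complex \<Rightarrow> complex \<Rightarrow> complex \<Rightarrow> complex \<Rightarrow> complex \<Rightarrow> complex
    \<Rightarrow> complex \<Rightarrow> complex \<Rightarrow> complex \<Rightarrow> complex \<Rightarrow> bool" where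
  "crossing_eqs eps a1 b1 m1 a2 b2 m2 a1' b1' a2' b2' \<longleftrightarrow>
     (if eps = 1 then
        (let A = 1 - (m1 * b1 / b2) * (1 - a1 / m1) * (1 - 1 / (m2 * a2)) in
           a1' = a1 / A \<and> a2' = a2 * A \<and>
           b1' = (m2 * b2 / m1) * inverse (1 - m2 * a2 * (1 - b2 / (m1 * b1))) \<and>
           b2' = b1 * (1 - (m1 / a1) * (1 - b2 / (m1 * b1))))
      else
        (let A = 1 - (b2 / (m1 * b1)) * (1 - m1 * a1) * (1 - m2 / a2) in
           a1' = a1 / A \<and> a2' = a2 * A \<and>
           b1' = (m2 * b2 / m1) * (1 - (a2 / m2) * (1 - m1 * b1 / b2)) \<and>
           b2' = b1 * inverse (1 - (1 / (m1 * a1)) * (1 - m1 * b1 / b2))))"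

text \<open>Since division by zero is 0
  in HOL, nonzeroness of the outputs forces all denominators to be nonzero.\<close>
definition shaping :: "('c, 's, 'r, 'j) link_diagram \<Rightarrow> ('s \<Rightarrow> complex) \<Rightarrow> ('s \<Rightarrow> complex)
    \<Rightarrow> ('s \<Rightarrow> complex) \<Rightarrow> bool" where
  "shaping D a b m \<longleftrightarrow>
     (\<forall>k\<in>segs D. a k \<noteq> 0 \<and> b k \<noteq> 0 \<and> m k \<noteq> 0) \<and>
     (\<forall>k\<in>segs D. \<forall>k'\<in>segs D. comp D k = comp D k' \<longrightarrow> m k = m k') \<and>
     (\<forall>c\<in>crossings D.
        crossing_eqs (sgn D c)
          (a (s1 D c)) (b (s1 D c)) (m (s1 D c))
          (a (s2 D c)) (b (s2 D c)) (m (s2 D c))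
          (a (s1o D c)) (b (s1o D c)) (a (s2o D c)) (b (s2o D c)))"

definition pinched :: "('c, 's, 'r, 'j) link_diagram \<Rightarrow> ('s \<Rightarrow> complex) \<Rightarrow> 'c \<Rightarrow> bool" where
  "pinched D b c \<longleftrightarrow> b (s2o D c) = b (s1 D c)"

definition flattening :: "('c, 's, 'r, 'j) link_diagram \<Rightarrow> ('s \<Rightarrow> complex) \<Rightarrow> ('s \<Rightarrow> complex)
    \<Rightarrow> ('s \<Rightarrow> complex) \<Rightarrow> ('j \<Rightarrow> complex) \<Rightarrow> ('s \<Rightarrow> complex) \<Rightarrow> ('r \<Rightarrow> complex)
    \<Rightarrow> ('c \<Rightarrow> complex) \<Rightarrow> bool" where
  "flattening D a b m \<mu> \<beta> \<gamma> \<kappa> \<longleftrightarrow>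
     (\<forall>k\<in>segs D. exp (2 * pi * \<i> * \<mu> (comp D k)) = m k) \<and>
     (\<forall>k\<in>segs D. exp (2 * pi * \<i> * \<beta> k) = b k) \<and>
     (\<forall>k\<in>segs D. exp (2 * pi * \<i> * (\<gamma> (rreg D k) - \<gamma> (lreg D k))) = a k) \<and>
     (\<forall>c\<in>crossings D. \<not> pinched D b c \<longrightarrow>
        exp (2 * pi * \<i> * \<kappa> c) =
          exp (2 * pi * \<i> * \<gamma> (rN D c)) / (1 - (b (s2o D c) / b (s1 D c)) powi (sgn D c)))"

text \<open>Li2 w = - integral from 0 to w of log(1-t)/t dt, along the straight segment
  (substituting t = s w), with the principal logarithm.\<close>
definition Li2 :: "complex \<Rightarrow> complex" where
  "Li2 w = - integral {0..1} (\<lambda>s::real. Ln (1 - of_real s * w) / of_real s)"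

definition Rogers :: "complex \<Rightarrow> complex" where
  "Rogers w = Li2 w + Ln w * Ln (1 - w) / 2"

definition lifted_L :: "complex \<Rightarrow> complex \<Rightarrow> complex" where
  "lifted_L z0 z1 =
     (let w = exp z0;
          p0 = (z0 - Ln w) / (2 * pi * \<i>);
          p1 = (z1 + Ln (1 - w)) / (2 * pi * \<i>)
      in Rogers w - pi\<^sup>2 / 6 + pi * \<i> * (p0 * Ln (1 - w) + p1 * Ln w))"

definition crossing_volume :: "('c, 's, 'r, 'j) link_diagram \<Rightarrow> ('s \<Rightarrow> complex)
    \<Rightarrow> ('j \<Rightarrow> complex) \<Rightarrow> ('s \<Rightarrow> complex) \<Rightarrow> ('r \<Rightarrow> complex) \<Rightarrow> ('c \<Rightarrow> complex) \<Rightarrow> 'c \<Rightarrow> complex" where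
  "crossing_volume D b \<mu> \<beta> \<gamma> \<kappa> c =
     (let e = of_int (sgn D c) :: complex;
          \<mu>1 = \<mu> (comp D (s1 D c)); \<mu>2 = \<mu> (comp D (s2 D c));
          b1 = \<beta> (s1 D c); b2 = \<beta> (s2 D c); b1' = \<beta> (s1o D c); b2' = \<beta> (s2o D c);
          gN = \<gamma> (rN D c); gS = \<gamma> (rS D c); gW = \<gamma> (rW D c); gE = \<gamma> (rE D c);
          k = \<kappa> c;
          t = 2 * pi * \<i>
      in if pinched D b c then
           2 * pi\<^sup>2 * \<i> *
             (b1 * (gW - gN) - b1' * (gS - gE) + b2 * (gS - gW) - b2' * (gE - gN)
              - \<mu>1 * (e * (b1 - b1' + \<mu>2) + gS - gW)
              - \<mu>2 * (e * (b2' - b2 + \<mu>1) + gE - gS))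
         else
           - \<i> * e *
             (lifted_L (t * e * (b2' - b1)) (t * (k - gN))
              - lifted_L (t * e * (b2 - b1 - \<mu>1)) (t * (k - gW + e * \<mu>1))
              + lifted_L (t * e * (b2 - b1' + \<mu>2 - \<mu>1)) (t * (k - gS + e * (\<mu>1 - \<mu>2)))
              - lifted_L (t * e * (b2' - b1' + \<mu>2)) (t * (k - gE - e * \<mu>2))))"

definition diagram_volume :: "('c, 's, 'r, 'j) link_diagram \<Rightarrow> ('s \<Rightarrow> complex)
    \<Rightarrow> ('j \<Rightarrow> complex) \<Rightarrow> ('s \<Rightarrow> complex) \<Rightarrow> ('r \<Rightarrow> complex) \<Rightarrow> ('c \<Rightarrow> complex) \<Rightarrow> complex" where
  "diagram_volume D b \<mu> \<beta> \<gamma> \<kappa> = (\<Sum>c\<in>crossings D. crossing_volume D b \<mu> \<beta> \<gamma> \<kappa> c)"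

definition cong_2pi2i :: "complex \<Rightarrow> complex \<Rightarrow> bool" where
  "cong_2pi2i x y \<longleftrightarrow> (\<exists>n::int. x - y = 2 * pi\<^sup>2 * \<i> * of_int n)"

text \<open>Convention: at a positive crossing strand 1 (upper-left to lower-right) is the
  overstrand, at a negative crossing strand 2 is.\<close>
definition over_start :: "('c, 's, 'r, 'j) link_diagram \<Rightarrow> 's \<Rightarrow> bool" where
  "over_start D k \<longleftrightarrow> (\<exists>c\<in>crossings D. (s1o D c = k \<and> sgn D c = 1) \<or> (s2o D c = k \<and> sgn D c = -1))"
definition under_start :: "('c, 's, 'r, 'j) link_diagram \<Rightarrow> 's \<Rightarrow> bool" where
  "under_start D k \<longleftrightarrow> (\<exists>c\<in>crossings D. (s1o D c = k \<and> sgn D c = -1) \<or> (s2o D c = k \<and> sgn D c = 1))"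
definition over_end :: "('c, 's, 'r, 'j) link_diagram \<Rightarrow> 's \<Rightarrow> bool" where
  "over_end D k \<longleftrightarrow> (\<exists>c\<in>crossings D. (s1 D c = k \<and> sgn D c = 1) \<or> (s2 D c = k \<and> sgn D c = -1))"
definition under_end :: "('c, 's, 'r, 'j) link_diagram \<Rightarrow> 's \<Rightarrow> bool" where
  "under_end D k \<longleftrightarrow> (\<exists>c\<in>crossings D. (s1 D c = k \<and> sgn D c = -1) \<or> (s2 D c = k \<and> sgn D c = 1))"

definition eta :: "('c, 's, 'r, 'j) link_diagram \<Rightarrow> 's \<Rightarrow> int" where
  "eta D k = (if over_start D k \<and> under_end D k then 1
              else if under_start D k \<and> over_end D k then -1 else 0)"

definition writhe :: "('c, 's, 'r, 'j) link_diagram \<Rightarrow> 'j \<Rightarrow> int" where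
  "writhe D j = (\<Sum>c\<in>{c\<in>crossings D. comp D (s1 D c) = j \<and> comp D (s2 D c) = j}. sgn D c)"

definition logdec_mer :: "('j \<Rightarrow> complex) \<Rightarrow> 'j \<Rightarrow> complex" where
  "logdec_mer \<mu> j = \<mu> j"

definition logdec_lon :: "('c, 's, 'r, 'j) link_diagram \<Rightarrow> ('j \<Rightarrow> complex) \<Rightarrow> ('s \<Rightarrow> complex) \<Rightarrow> 'j \<Rightarrow> complex" where
  "logdec_lon D \<mu> \<beta> j =
     - of_int (writhe D j) * \<mu> j + (\<Sum>k\<in>{k\<in>segs D. comp D k = j}. of_int (eta D k) * \<beta> k)"

end

theory Submission
  imports Defs
begin

lemma alg_pos:
  fixes a1 b1 m1 a2 b2 m2 a1o b1o a2o b2o :: complex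
  assumes ce: "crossing_eqs 1 a1 b1 m1 a2 b2 m2 a1o b1o a2o b2o"
    and nz: "a1 \<noteq> 0" "b1 \<noteq> 0" "m1 \<noteq> 0" "a2 \<noteq> 0" "b2 \<noteq> 0" "m2 \<noteq> 0"
       "a1o \<noteq> 0" "b1o \<noteq> 0" "a2o \<noteq> 0" "b2o \<noteq> 0"
  shows "inverse a1 * m1 * (1 - b2/(b1*m1)) = 1 - b2o/b1"
    and "inverse (a1*a2) * (m1/m2) * (1 - b2*m2/(b1o*m1)) = 1 - b2o/b1"
    and "inverse a2o * inverse m2 * (1 - b2o*m2/b1o) = 1 - b2o/b1"
proof -
  define A where "A = 1 - (m1 * b1 / b2) * (1 - a1 / m1) * (1 - 1 / (m2 * a2))"
  define Dn where "Dn = 1 - m2 * a2 * (1 - b2 / (m1 * b1))"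
  have e: "a1o = a1 / A" "a2o = a2 * A" "b1o = (m2 * b2 / m1) * inverse Dn"
      "b2o = b1 * (1 - (m1 / a1) * (1 - b2 / (m1 * b1)))"
    using ce by (simp_all add: crossing_eqs_def A_def Dn_def Let_def)
  have A0: "A \<noteq> 0" using e(1) nz by auto
  have D0: "Dn \<noteq> 0" using e(3) nz by auto
  show "inverse a1 * m1 * (1 - b2/(b1*m1)) = 1 - b2o/b1"
    using nz by (simp add: e field_simps)
  show "inverse (a1*a2) * (m1/m2) * (1 - b2*m2/(b1o*m1)) = 1 - b2o/b1"
    using nz A0 D0 unfolding e by (simp add: field_simps Dn_def)
  define u where "u = m1*b1 - b2"
  have b2o': "b2o = (a1*b1 - u)/a1" using nz by (simp add: e u_def field_simps)
  have Dn': "Dn = (m1*b1 - m2*a2*u)/(m1*b1)" using nz by (simp add: Dn_def u_def field_simps)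
  have N0: "m1*b1 - m2*a2*u \<noteq> 0" using D0 Dn' by auto
  have b1o': "b1o = m2*b2*b1/(m1*b1 - m2*a2*u)" using nz N0 by (simp add: e(3) Dn' field_simps)
  have A': "A = (b2*m2*a2 - b1*(m1-a1)*(m2*a2-1))/(b2*m2*a2)" using nz by (simp add: A_def field_simps)
  have B0: "b2*m2*a2 - b1*(m1-a1)*(m2*a2-1) \<noteq> 0" using A0 A' by auto
  have l: "1 - b2o/b1 = u/(a1*b1)" using nz by (simp add: b2o' field_simps)
  have r: "1 - b2o*m2/b1o = (a1*b1*b2 - (a1*b1 - u)*(m1*b1 - m2*a2*u))/(a1*b1*b2)"
    using nz N0 by (simp add: b2o' b1o' field_simps)
  have key: "a1*b1*b2 - (a1*b1 - u)*(m1*b1 - m2*a2*u) = u*(b2*m2*a2 - b1*(m1-a1)*(m2*a2-1))"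
    by (simp add: u_def algebra_simps)
  show "inverse a2o * inverse m2 * (1 - b2o*m2/b1o) = 1 - b2o/b1"
  proof -
    define B where "B = b2*m2*a2 - b1*(m1-a1)*(m2*a2-1)"
    have a2o': "a2o = B/(b2*m2)" using nz by (simp add: e(2) A' B_def field_simps)
    have B0': "B \<noteq> 0" using B0 B_def by simp
    have "inverse a2o * inverse m2 * (1 - b2o*m2/b1o) = inverse (B/(b2*m2)) * inverse m2 * (u*B/(a1*b1*b2))"
      unfolding r key a2o' B_def by simp
    also have "... = u/(a1*b1)" using nz B0' by (simp add: field_simps)
    finally show ?thesis using l by simp
  qed
qed
lemma alg_neg:
  fixes a1 b1 m1 a2 b2 m2 a1o b1o a2o b2o :: complex
  assumes ce: "crossing_eqs (-1) a1 b1 m1 a2 b2 m2 a1o b1o a2o b2o"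
    and nz: "a1 \<noteq> 0" "b1 \<noteq> 0" "m1 \<noteq> 0" "a2 \<noteq> 0" "b2 \<noteq> 0" "m2 \<noteq> 0"
       "a1o \<noteq> 0" "b1o \<noteq> 0" "a2o \<noteq> 0" "b2o \<noteq> 0"
  shows "inverse a1 * inverse m1 * (1 - inverse (b2/(b1*m1))) = 1 - inverse (b2o/b1)"
    and "inverse (a1*a2) * inverse (m1/m2) * (1 - inverse (b2*m2/(b1o*m1))) = 1 - inverse (b2o/b1)"
    and "inverse a2o * m2 * (1 - inverse (b2o*m2/b1o)) = 1 - inverse (b2o/b1)"
proof -
  define A where "A = 1 - (b2 / (m1 * b1)) * (1 - m1 * a1) * (1 - m2 / a2)"
  define Dn where "Dn = 1 - (1 / (m1 * a1)) * (1 - m1 * b1 / b2)"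
  have e: "a1o = a1 / A" "a2o = a2 * A" "b1o = (m2 * b2 / m1) * (1 - (a2 / m2) * (1 - m1 * b1 / b2))"
      "b2o = b1 * inverse Dn"
    using ce by (simp_all add: crossing_eqs_def A_def Dn_def Let_def)
  have A0: "A \<noteq> 0" using e(1) nz by auto
  have D0: "Dn \<noteq> 0" using e(4) nz by auto
  define u where "u = b2 - m1*b1"
  have Dn': "Dn = (m1*a1*b2 - u)/(m1*a1*b2)" using nz by (simp add: Dn_def u_def field_simps)
  have N0: "m1*a1*b2 - u \<noteq> 0" using D0 Dn' by auto
  have b2o': "b2o = b1*m1*a1*b2/(m1*a1*b2 - u)" using nz N0 by (simp add: e(4) Dn' field_simps)
  have b1o': "b1o = (m2*b2 - a2*u)/m1" using nz by (simp add: e(3) u_def field_simps)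
  have l: "1 - inverse (b2o/b1) = u/(m1*a1*b2)" using nz N0 by (simp add: b2o' field_simps)
  show "inverse a1 * inverse m1 * (1 - inverse (b2/(b1*m1))) = 1 - inverse (b2o/b1)"
    unfolding l using nz by (simp add: u_def field_simps)
  show "inverse (a1*a2) * inverse (m1/m2) * (1 - inverse (b2*m2/(b1o*m1))) = 1 - inverse (b2o/b1)"
    unfolding l using nz by (simp add: b1o' u_def field_simps)
  define C where "C = m1*b1*a2 - b2*(1-m1*a1)*(a2-m2)"
  have A': "A = C/(m1*b1*a2)" using nz by (simp add: A_def C_def field_simps)
  have C0: "C \<noteq> 0" using A0 A' by auto
  have r: "1 - inverse (b2o*m2/b1o) = (m1*m1*a1*b1*b2*m2 - (m2*b2 - a2*u)*(m1*a1*b2 - u))/(m1*m1*a1*b1*b2*m2)"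
    using nz N0 by (simp add: b2o' b1o' field_simps)
  have key: "m1*m1*a1*b1*b2*m2 - (m2*b2 - a2*u)*(m1*a1*b2 - u) = C*u"
    by (simp add: u_def C_def algebra_simps)
  have a2o': "a2o = C/(m1*b1)" using nz by (simp add: e(2) A' field_simps)
  have "inverse a2o * m2 * (1 - inverse (b2o*m2/b1o)) = inverse (C/(m1*b1)) * m2 * (C*u/(m1*m1*a1*b1*b2*m2))"
    unfolding r key a2o' by simp
  also have "... = u/(m1*a1*b2)" using nz C0 by (simp add: field_simps)
  finally show "inverse a2o * m2 * (1 - inverse (b2o*m2/b1o)) = 1 - inverse (b2o/b1)" using l by simp
qed

lemma exp_eq_1_int:
  fixes z :: complex
  assumes "exp z = 1" shows "\<exists>n::int. z = 2 * pi * \<i> * of_int n"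
proof -
  have "exp z = exp 0" using assms by simp
  then obtain n::int where "z = 0 + (of_int (2 * n) * pi) * \<i>" unfolding exp_eq by blast
  then show ?thesis by (intro exI[of _ n]) simp
qed

lemma exp_2pii_int [simp]: "exp (2 * complex_of_real pi * \<i> * of_int n) = 1"
proof -
  have "exp ((2 * of_int n * pi) * \<i>) = 1" by (rule exp_integer_2pi) simp
  then show ?thesis by (simp add: mult_ac)
qed

lemma lifted_L_shift:
  fixes z0 z1 z0' z1' :: complex and n0 n1 :: int
  assumes h: "exp z1 * (1 - exp z0) = 1"
    and s0: "z0' = z0 + 2 * pi * \<i>* of_int n0" and s1: "z1' = z1 + 2 * pi * \<i>* of_int n1"
  shows "\<exists>q::int. lifted_L z0' z1' - lifted_L z0 z1 = - 2 * pi\<^sup>2 * of_int q + ((z1'-z1)*z0 - (z0'-z0)*z1)/2"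
proof -
  define w where "w = exp z0"
  have w': "exp z0' = w" unfolding w_def s0 by (simp add: exp_add)
  have w0: "w \<noteq> 0" unfolding w_def by simp
  have w1: "1 - w \<noteq> 0" using h unfolding w_def by auto
  have "exp (z0 - Ln w) = 1" using w0 by (simp add: exp_diff w_def)
  then obtain q0::int where q0: "z0 - Ln w = 2 * pi * \<i>* of_int q0" using exp_eq_1_int by blast
  have "exp (z1 + Ln (1 - w)) = 1" using w1 h by (simp add: exp_add w_def)
  then obtain q1::int where q1: "z1 + Ln (1 - w) = 2 * pi * \<i>* of_int q1" using exp_eq_1_int by blast
  have pi0: "pi \<noteq> 0" by simp
  have L1: "Ln w = z0 - 2 * pi * \<i>* of_int q0" using q0 by (simp add: algebra_simps)
  have L2: "Ln (1 - w) = 2 * pi * \<i>* of_int q1 - z1" using q1 by (simp add: algebra_simps)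
  define T where "T = 2 * pi * \<i>"
  have T0: "T \<noteq> 0" unfolding T_def by simp
  have e1: "lifted_L z0' z1' = Rogers w - pi\<^sup>2 / 6 + pi * \<i> * ((z0' - Ln w) / T * Ln (1 - w) + (z1' + Ln (1 - w)) / T * Ln w)"
    unfolding lifted_L_def Let_def w' T_def by simp
  have e2: "lifted_L z0 z1 = Rogers w - pi\<^sup>2 / 6 + pi * \<i> * ((z0 - Ln w) / T * Ln (1 - w) + (z1 + Ln (1 - w)) / T * Ln w)"
    unfolding lifted_L_def Let_def w_def T_def by simp
  have s0': "z0' = z0 + T * of_int n0" and s1': "z1' = z1 + T * of_int n1" using s0 s1 T_def by simp_all
  have "lifted_L z0' z1' - lifted_L z0 z1 = pi * \<i> * (of_int n0 * Ln (1 - w) + of_int n1 * Ln w)"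
    unfolding e1 e2 unfolding s0' s1' using T0 by (simp add: field_simps)
  also have "... = - 2 * pi\<^sup>2 * of_int (n0*q1 - n1*q0) + ((z1'-z1)*z0 - (z0'-z0)*z1)/2"
    unfolding L1 L2 s0 s1 by (simp add: field_simps power2_eq_square)
  finally show ?thesis by blast
qed

lemma alg_gen:
  fixes a1 b1 m1 a2 b2 m2 a1o b1o a2o b2o :: complex and e :: int
  assumes e: "e = 1 \<or> e = -1"
    and ce: "crossing_eqs e a1 b1 m1 a2 b2 m2 a1o b1o a2o b2o"
    and nz: "a1 \<noteq> 0" "b1 \<noteq> 0" "m1 \<noteq> 0" "a2 \<noteq> 0" "b2 \<noteq> 0" "m2 \<noteq> 0"
       "a1o \<noteq> 0" "b1o \<noteq> 0" "a2o \<noteq> 0" "b2o \<noteq> 0"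
  shows "inverse a1 * m1 powi e * (1 - (b2/(b1*m1)) powi e) = 1 - (b2o/b1) powi e" (is ?A)
    and "inverse (a1*a2) * (m1/m2) powi e * (1 - (b2*m2/(b1o*m1)) powi e) = 1 - (b2o/b1) powi e" (is ?B)
    and "inverse a2o * m2 powi (-e) * (1 - (b2o*m2/b1o) powi e) = 1 - (b2o/b1) powi e" (is ?C)
proof -
  have "?A \<and> ?B \<and> ?C" using e
  proof (elim disjE)
    assume e1: "e = 1"
    note r = alg_pos[OF ce[unfolded e1] nz]
    show ?thesis using r e1 by (simp add: power_int_minus)
  next
    assume e1: "e = -1"
    have ce': "crossing_eqs (-1) a1 b1 m1 a2 b2 m2 a1o b1o a2o b2o" using ce e1 by simp
    note r = alg_neg[OF ce' nz]
    show ?thesis using r e1 by (simp add: power_int_minus)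
  qed
  then show ?A ?B ?C by auto
qed

lemma alg_pinched:
  fixes a1 b1 m1 a2 b2 m2 a1o b1o a2o b2o :: complex and e :: int
  assumes e: "e = 1 \<or> e = -1"
    and ce: "crossing_eqs e a1 b1 m1 a2 b2 m2 a1o b1o a2o b2o"
    and nz: "a1 \<noteq> 0" "b1 \<noteq> 0" "m1 \<noteq> 0" "a2 \<noteq> 0" "b2 \<noteq> 0" "m2 \<noteq> 0"
       "a1o \<noteq> 0" "b1o \<noteq> 0" "a2o \<noteq> 0" "b2o \<noteq> 0"
    and p: "b2o = b1"
  shows "b2 = m1 * b1 \<and> b1o = m2 * b2o"
  using e
proof (elim disjE)
  assume e1: "e = 1"
  have h: "b2o = b1 * (1 - (m1 / a1) * (1 - b2 / (m1 * b1)))"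
    and h2: "b1o = (m2 * b2 / m1) * inverse (1 - m2 * a2 * (1 - b2 / (m1 * b1)))"
    using ce e1 by (simp_all add: crossing_eqs_def Let_def)
  have "b1 * (1 - (m1 / a1) * (1 - b2 / (m1 * b1))) = b1 * 1" using h p by simp
  then have "1 - (m1 / a1) * (1 - b2 / (m1 * b1)) = 1" using nz(2) mult_left_cancel by blast
  then have "(m1 / a1) * (1 - b2 / (m1 * b1)) = 0" by simp
  then have "b2 = m1 * b1" using nz by (simp add: field_simps)
  moreover then have "b1o = m2 * b2o" using h2 p nz by simp
  ultimately show ?thesis by simp
next
  assume e1: "e = -1"
  have h: "b2o = b1 * inverse (1 - (1 / (m1 * a1)) * (1 - m1 * b1 / b2))"
    and h2: "b1o = (m2 * b2 / m1) * (1 - (a2 / m2) * (1 - m1 * b1 / b2))"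
    using ce e1 by (simp_all add: crossing_eqs_def Let_def)
  have "inverse (1 - (1 / (m1 * a1)) * (1 - m1 * b1 / b2)) = 1" using h p nz by simp
  then have "1 - (1 / (m1 * a1)) * (1 - m1 * b1 / b2) = 1"
    by (metis inverse_1 inverse_inverse_eq)
  then have "(1 / (m1 * a1)) * (1 - m1 * b1 / b2) = 0" by simp
  then have "b2 = m1 * b1" using nz by (simp add: field_simps)
  moreover then have "b1o = m2 * b2o" using h2 p nz by simp
  ultimately show ?thesis by simp
qed

lemma exp_eq_int:
  fixes x y :: complex
  assumes "exp (2 * pi * \<i> * x) = exp (2 * pi * \<i> * y)"
  shows "\<exists>n::int. x = y + of_int n"
proof -
  obtain n::int where "2 * pi * \<i> * x = 2 * pi * \<i> * y + (of_int (2 * n) * pi) * \<i>"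
    using assms unfolding exp_eq by blast
  then have "2 * pi * \<i> * x = 2 * pi * \<i> * (y + of_int n)" by (simp add: algebra_simps)
  then have "x = y + of_int n" by simp
  then show ?thesis by blast
qed

definition Jf :: "complex \<Rightarrow> complex \<Rightarrow> complex \<Rightarrow> complex \<Rightarrow> complex" where
  "Jf u u' v v' = (u' - u) * v - (v' - v) * u"

definition Graw :: "complex \<Rightarrow> complex \<Rightarrow> complex \<Rightarrow> complex \<Rightarrow> complex \<Rightarrow> complex \<Rightarrow> complex
   \<Rightarrow> complex \<Rightarrow> complex \<Rightarrow> complex \<Rightarrow> complex
   \<Rightarrow> complex \<Rightarrow> complex \<Rightarrow> complex \<Rightarrow> complex \<Rightarrow> complex \<Rightarrow> complex
   \<Rightarrow> complex \<Rightarrow> complex \<Rightarrow> complex \<Rightarrow> complex \<Rightarrow> complex" where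
  "Graw e mu1 mu2 B1 B2 B1o B2o gN gS gW gE mu1' mu2' B1' B2' B1o' B2o' gN' gS' gW' gE' =
     Jf (gN-gW) (gN'-gW') B1 B1' + Jf (gW-gS) (gW'-gS') B2 B2'
     - Jf (gE-gS) (gE'-gS') B1o B1o' - Jf (gN-gE) (gN'-gE') B2o B2o'
     + Jf gS gS' mu1 mu1' - Jf gW gW' mu1 mu1' + Jf gE gE' mu2 mu2' - Jf gS gS' mu2 mu2'
     + e * (Jf mu1 mu1' B1 B1' - Jf mu1 mu1' B1o B1o' - Jf mu2 mu2' B2 B2' + Jf mu2 mu2' B2o B2o')"

definition Qraw :: "complex \<Rightarrow> complex \<Rightarrow> complex \<Rightarrow> complex \<Rightarrow> complex \<Rightarrow> complex \<Rightarrow> complex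
   \<Rightarrow> complex \<Rightarrow> complex \<Rightarrow> complex \<Rightarrow> complex \<Rightarrow> complex" where
  "Qraw e \<mu>1 \<mu>2 b1 b2 b1' b2' gN gS gW gE =
     b1 * (gW - gN) - b1' * (gS - gE) + b2 * (gS - gW) - b2' * (gE - gN)
              - \<mu>1 * (e * (b1 - b1' + \<mu>2) + gS - gW)
              - \<mu>2 * (e * (b2' - b2 + \<mu>1) + gE - gS)"

definition cvnp :: "complex \<Rightarrow> complex \<Rightarrow> complex \<Rightarrow> complex \<Rightarrow> complex \<Rightarrow> complex \<Rightarrow> complex
   \<Rightarrow> complex \<Rightarrow> complex \<Rightarrow> complex \<Rightarrow> complex \<Rightarrow> complex \<Rightarrow> complex" where
  "cvnp e \<mu>1 \<mu>2 b1 b2 b1' b2' gN gS gW gE k =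
    (let t = 2 * pi * \<i> in
           - \<i> * e *
             (lifted_L (t * e * (b2' - b1)) (t * (k - gN))
              - lifted_L (t * e * (b2 - b1 - \<mu>1)) (t * (k - gW + e * \<mu>1))
              + lifted_L (t * e * (b2 - b1' + \<mu>2 - \<mu>1)) (t * (k - gS + e * (\<mu>1 - \<mu>2)))
              - lifted_L (t * e * (b2' - b1' + \<mu>2)) (t * (k - gE - e * \<mu>2))))"

lemma pinched_poly:
  fixes e B1 mu1 mu2 gN gW gS gE dl i1 i2 i3 j1 j2 k1 k2 k3 k4 dW dS dE :: complex
  assumes "B2 = B1 + mu1 + i1" "B2o = B1 + i3" "B1o = B2o + mu2 + i2"
    "mu1' = mu1 + j1" "mu2' = mu2 + j2" "B1' = B1 + k1" "B2' = B2 + k2" "B1o' = B1o + k3" "B2o' = B2o + k4"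
    "gN' = gN + dl" "gW' = gW + dl + dW" "gS' = gS + dl + dS" "gE' = gE + dl + dE"
  shows "Qraw e mu1' mu2' B1' B2' B1o' B2o' gN' gS' gW' gE' - Qraw e mu1 mu2 B1 B2 B1o B2o gN gS gW gE
     - Graw e mu1 mu2 B1 B2 B1o B2o gN gS gW gE mu1' mu2' B1' B2' B1o' B2o' gN' gS' gW' gE'
     = 2*dE*i2 - dE*j2 + dE*k3 - dE*k4 + 2*dS*i1 - 2*dS*i2 - 2*dS*i3 - dS*j1 + dS*j2 + dS*k2 - dS*k3
       - 2*dW*i1 + dW*j1 + dW*k1 - dW*k2
       + e*(2*i1*j2 + 2*i2*j1 + 2*i3*j1 - 2*i3*j2 - 2*j1*j2 - j1*k1 + j1*k3 + j2*k2 - j2*k4)"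
  unfolding assms Qraw_def Graw_def Jf_def by (simp add: algebra_simps)

lemma np_core:
  fixes e mu1 mu2 B1 B2 B1o B2o gN gS gW gE k mu1' mu2' B1' B2' B1o' B2o' gN' gS' gW' gE' k' :: complex
  shows "((k' - gN') - (k - gN)) * (B2o - B1) - ((B2o' - B1') - (B2o - B1)) * (k - gN)
     - (((k' - gW' + e * mu1') - (k - gW + e * mu1)) * (B2 - B1 - mu1) - ((B2' - B1' - mu1') - (B2 - B1 - mu1)) * (k - gW + e * mu1))
     + (((k' - gS' + e * (mu1' - mu2')) - (k - gS + e * (mu1 - mu2))) * (B2 - B1o + mu2 - mu1) - ((B2' - B1o' + mu2' - mu1') - (B2 - B1o + mu2 - mu1)) * (k - gS + e * (mu1 - mu2)))
     - (((k' - gE' - e * mu2') - (k - gE - e * mu2)) * (B2o - B1o + mu2) - ((B2o' - B1o' + mu2') - (B2o - B1o + mu2)) * (k - gE - e * mu2))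
     = Graw e mu1 mu2 B1 B2 B1o B2o gN gS gW gE mu1' mu2' B1' B2' B1o' B2o' gN' gS' gW' gE'"
  unfolding Graw_def Jf_def by (simp add: algebra_simps)

lemma exp_lin:
  fixes t x :: complex
  shows "exp (t * of_int e * x) = exp (t * x) powi e"
  by (simp add: exp_power_int mult_ac)

lemma local_np:
  fixes e :: int and a1 b1 m1 a2 b2 m2 a1o b1o a2o b2o :: complex
    and mu1 mu2 B1 B2 B1o B2o gN gS gW gE k mu1' mu2' B1' B2' B1o' B2o' gN' gS' gW' gE' k' :: complex
  assumes e: "e = 1 \<or> e = -1"
    and ce: "crossing_eqs e a1 b1 m1 a2 b2 m2 a1o b1o a2o b2o"
    and nz: "a1 \<noteq> 0" "b1 \<noteq> 0" "m1 \<noteq> 0" "a2 \<noteq> 0" "b2 \<noteq> 0" "m2 \<noteq> 0"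
       "a1o \<noteq> 0" "b1o \<noteq> 0" "a2o \<noteq> 0" "b2o \<noteq> 0"
    and np: "b2o \<noteq> b1"
    and f: "exp (2 * pi * \<i> * mu1) = m1" "exp (2 * pi * \<i> * mu2) = m2"
      "exp (2 * pi * \<i> * B1) = b1" "exp (2 * pi * \<i> * B2) = b2"
      "exp (2 * pi * \<i> * B1o) = b1o" "exp (2 * pi * \<i> * B2o) = b2o"
      "exp (2 * pi * \<i> * (gW - gN)) = a1" "exp (2 * pi * \<i> * (gS - gW)) = a2"
      "exp (2 * pi * \<i> * (gS - gE)) = a1o" "exp (2 * pi * \<i> * (gE - gN)) = a2o"
      "exp (2 * pi * \<i> * k) = exp (2 * pi * \<i> * gN) / (1 - (b2o / b1) powi e)"
    and f': "exp (2 * pi * \<i> * mu1') = m1" "exp (2 * pi * \<i> * mu2') = m2"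
      "exp (2 * pi * \<i> * B1') = b1" "exp (2 * pi * \<i> * B2') = b2"
      "exp (2 * pi * \<i> * B1o') = b1o" "exp (2 * pi * \<i> * B2o') = b2o"
      "exp (2 * pi * \<i> * (gW' - gN')) = a1" "exp (2 * pi * \<i> * (gS' - gW')) = a2"
      "exp (2 * pi * \<i> * (gS' - gE')) = a1o" "exp (2 * pi * \<i> * (gE' - gN')) = a2o"
      "exp (2 * pi * \<i> * k') = exp (2 * pi * \<i> * gN') / (1 - (b2o / b1) powi e)"
  shows "\<exists>n::int. cvnp (of_int e) mu1' mu2' B1' B2' B1o' B2o' gN' gS' gW' gE' k'
      - cvnp (of_int e) mu1 mu2 B1 B2 B1o B2o gN gS gW gE k
      = 2 * pi\<^sup>2 * \<i> * (Graw (of_int e) mu1 mu2 B1 B2 B1o B2o gN gS gW gE mu1' mu2' B1' B2' B1o' B2o' gN' gS' gW' gE' + of_int n)"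
proof -
  define t :: complex where "t = 2 * pi * \<i>"
  define ee :: complex where "ee = of_int e"
  have ee2: "ee * ee = 1" using e unfolding ee_def by auto
  note fT = f[folded t_def] and fT' = f'[folded t_def]
  note eqint = exp_eq_int[folded t_def]
  have ediff: "exp (t * (x - y)) = exp (t * x) / exp (t * y)" for x y
    by (simp add: right_diff_distrib exp_diff)
  have eadd: "exp (t * (x + y)) = exp (t * x) * exp (t * y)" for x y
    by (simp add: distrib_left exp_add)
  define wN where "wN = (b2o / b1) powi e"
  have wN1: "1 - wN \<noteq> 0"
    using e np nz unfolding wN_def by (auto simp: power_int_minus field_simps)
  have K: "exp (t * (k - gN)) = 1 / (1 - wN)"
    using fT(11) wN1 by (simp add: ediff wN_def)
  have K': "exp (t * (k' - gN')) = 1 / (1 - wN)"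
    using fT'(11) wN1 by (simp add: ediff wN_def)
  obtain j1 where j1: "mu1' = mu1 + of_int j1" using eqint[of mu1' mu1] fT(1) fT'(1) by auto
  obtain j2 where j2: "mu2' = mu2 + of_int j2" using eqint[of mu2' mu2] fT(2) fT'(2) by auto
  obtain k1 where k1: "B1' = B1 + of_int k1" using eqint[of B1' B1] fT(3) fT'(3) by auto
  obtain k2 where k2: "B2' = B2 + of_int k2" using eqint[of B2' B2] fT(4) fT'(4) by auto
  obtain k3 where k3: "B1o' = B1o + of_int k3" using eqint[of B1o' B1o] fT(5) fT'(5) by auto
  obtain k4 where k4: "B2o' = B2o + of_int k4" using eqint[of B2o' B2o] fT(6) fT'(6) by auto
  obtain r1 where r1: "gW' - gN' = gW - gN + of_int r1" using eqint[of "gW' - gN'" "gW - gN"] fT(7) fT'(7) by auto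
  obtain r2 where r2: "gS' - gW' = gS - gW + of_int r2" using eqint[of "gS' - gW'" "gS - gW"] fT(8) fT'(8) by auto
  obtain r4 where r4: "gE' - gN' = gE - gN + of_int r4" using eqint[of "gE' - gN'" "gE - gN"] fT(10) fT'(10) by auto
  obtain r5 where r5: "k' - gN' = k - gN + of_int r5" using eqint[of "k' - gN'" "k - gN"] K K' by auto
  have gW': "gW' = gN' + (gW - gN) + of_int r1" using r1 by (simp add: algebra_simps)
  have gS': "gS' = gW' + (gS - gW) + of_int r2" using r2 by (simp add: algebra_simps)
  have gE': "gE' = gN' + (gE - gN) + of_int r4" using r4 by (simp add: algebra_simps)
  have kk': "k' = gN' + (k - gN) + of_int r5" using r5 by (simp add: algebra_simps)
  note subs = j1 j2 k1 k2 k3 k4 gS' gW' gE' kk'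
  note ag = alg_gen[OF e ce nz]
  have cN: "exp (t * (k - gN)) * (1 - exp (t * ee * (B2o - B1))) = 1"
  proof -
    have "exp (t * ee * (B2o - B1)) = wN" unfolding ee_def wN_def exp_lin
      using fT by (simp add: ediff)
    then show ?thesis using K wN1 by simp
  qed
  have cW: "exp (t * (k - gW + ee * mu1)) * (1 - exp (t * ee * (B2 - B1 - mu1))) = 1"
  proof -
    have "exp (t * ee * (B2 - B1 - mu1)) = exp (t * (B2 - B1 - mu1)) powi e" unfolding ee_def exp_lin ..
    also have "exp (t * (B2 - B1 - mu1)) = b2 / (b1 * m1)" using fT by (simp add: ediff)
    finally have z0: "exp (t * ee * (B2 - B1 - mu1)) = (b2 / (b1 * m1)) powi e" .
    have "t * (k - gW + ee * mu1) = t * (k - gN) - t * (gW - gN) + t * of_int e * mu1"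
      unfolding ee_def by (simp add: algebra_simps)
    then have z1: "exp (t * (k - gW + ee * mu1)) = (1 / (1 - wN)) / a1 * m1 powi e"
      using K fT by (simp add: exp_add exp_diff exp_lin)
    show ?thesis unfolding z0 z1 using ag(1) wN1 nz unfolding wN_def
      by (simp add: field_simps)
  qed
  have cS: "exp (t * (k - gS + ee * (mu1 - mu2))) * (1 - exp (t * ee * (B2 - B1o + mu2 - mu1))) = 1"
  proof -
    have "exp (t * ee * (B2 - B1o + mu2 - mu1)) = exp (t * (B2 - B1o + mu2 - mu1)) powi e" unfolding ee_def exp_lin ..
    also have "exp (t * (B2 - B1o + mu2 - mu1)) = b2 * m2 / (b1o * m1)" using fT by (simp add: ediff eadd)
    finally have z0: "exp (t * ee * (B2 - B1o + mu2 - mu1)) = (b2 * m2 / (b1o * m1)) powi e" .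
    have "t * (k - gS + ee * (mu1 - mu2)) = t * (k - gN) - t * (gW - gN) - t * (gS - gW) + t * of_int e * (mu1 - mu2)"
      unfolding ee_def by (simp add: algebra_simps)
    then have z1: "exp (t * (k - gS + ee * (mu1 - mu2))) = (1 / (1 - wN)) / a1 / a2 * (m1 / m2) powi e"
      using K fT by (simp add: exp_add exp_diff exp_lin ediff)
    show ?thesis unfolding z0 z1 using ag(2) wN1 nz unfolding wN_def
      by (simp add: field_simps)
  qed
  have cE: "exp (t * (k - gE - ee * mu2)) * (1 - exp (t * ee * (B2o - B1o + mu2))) = 1"
  proof -
    have "exp (t * ee * (B2o - B1o + mu2)) = exp (t * (B2o - B1o + mu2)) powi e" unfolding ee_def exp_lin ..
    also have "exp (t * (B2o - B1o + mu2)) = b2o * m2 / b1o" using fT by (simp add: ediff eadd)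
    finally have z0: "exp (t * ee * (B2o - B1o + mu2)) = (b2o * m2 / b1o) powi e" .
    have "t * (k - gE - ee * mu2) = t * (k - gN) - t * (gE - gN) + t * of_int (-e) * mu2"
      unfolding ee_def by (simp add: algebra_simps)
    then have z1: "exp (t * (k - gE - ee * mu2)) = (1 / (1 - wN)) / a2o * m2 powi (-e)"
      using K fT by (simp add: exp_add exp_diff exp_lin del: of_int_minus)
    show ?thesis unfolding z0 z1 using ag(3) wN1 nz unfolding wN_def
      by (simp add: field_simps)
  qed
  have sh: "\<And>(z0::complex) (z1::complex) (z0'::complex) (z1'::complex) (n0::int) (n1::int). exp z1 * (1 - exp z0) = 1 \<Longrightarrow> z0' = z0 + t * of_int n0 \<Longrightarrow>
      z1' = z1 + t * of_int n1 \<Longrightarrow>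
      \<exists>q::int. lifted_L z0' z1' - lifted_L z0 z1 = - 2 * pi\<^sup>2 * of_int q + ((z1'-z1)*z0 - (z0'-z0)*z1)/2"
    unfolding t_def by (rule lifted_L_shift)
  have sN0: "t * ee * (B2o' - B1') = t * ee * (B2o - B1) + t * of_int (e * (k4 - k1))" unfolding subs ee_def by (simp add: algebra_simps)
  have sN1: "t * (k' - gN') = t * (k - gN) + t * of_int (r5)" unfolding subs ee_def by (simp add: algebra_simps)
  obtain qN where qN: "lifted_L (t * ee * (B2o' - B1')) (t * (k' - gN')) - lifted_L (t * ee * (B2o - B1)) (t * (k - gN))
     = - 2 * pi\<^sup>2 * of_int qN + (((t * (k' - gN')) - (t * (k - gN))) * (t * ee * (B2o - B1)) - ((t * ee * (B2o' - B1')) - (t * ee * (B2o - B1))) * (t * (k - gN)))/2"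
    using sh[OF cN sN0 sN1] by blast
  have sW0: "t * ee * (B2' - B1' - mu1') = t * ee * (B2 - B1 - mu1) + t * of_int (e * (k2 - k1 - j1))" unfolding subs ee_def by (simp add: algebra_simps)
  have sW1: "t * (k' - gW' + ee * mu1') = t * (k - gW + ee * mu1) + t * of_int (r5 - r1 + e * j1)" unfolding subs ee_def by (simp add: algebra_simps)
  obtain qW where qW: "lifted_L (t * ee * (B2' - B1' - mu1')) (t * (k' - gW' + ee * mu1')) - lifted_L (t * ee * (B2 - B1 - mu1)) (t * (k - gW + ee * mu1))
     = - 2 * pi\<^sup>2 * of_int qW + (((t * (k' - gW' + ee * mu1')) - (t * (k - gW + ee * mu1))) * (t * ee * (B2 - B1 - mu1)) - ((t * ee * (B2' - B1' - mu1')) - (t * ee * (B2 - B1 - mu1))) * (t * (k - gW + ee * mu1)))/2"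
    using sh[OF cW sW0 sW1] by blast
  have sS0: "t * ee * (B2' - B1o' + mu2' - mu1') = t * ee * (B2 - B1o + mu2 - mu1) + t * of_int (e * (k2 - k3 + j2 - j1))" unfolding subs ee_def by (simp add: algebra_simps)
  have sS1: "t * (k' - gS' + ee * (mu1' - mu2')) = t * (k - gS + ee * (mu1 - mu2)) + t * of_int (r5 - r1 - r2 + e * (j1 - j2))" unfolding subs ee_def by (simp add: algebra_simps)
  obtain qS where qS: "lifted_L (t * ee * (B2' - B1o' + mu2' - mu1')) (t * (k' - gS' + ee * (mu1' - mu2'))) - lifted_L (t * ee * (B2 - B1o + mu2 - mu1)) (t * (k - gS + ee * (mu1 - mu2)))
     = - 2 * pi\<^sup>2 * of_int qS + (((t * (k' - gS' + ee * (mu1' - mu2'))) - (t * (k - gS + ee * (mu1 - mu2)))) * (t * ee * (B2 - B1o + mu2 - mu1)) - ((t * ee * (B2' - B1o' + mu2' - mu1')) - (t * ee * (B2 - B1o + mu2 - mu1))) * (t * (k - gS + ee * (mu1 - mu2))))/2"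
    using sh[OF cS sS0 sS1] by blast
  have sE0: "t * ee * (B2o' - B1o' + mu2') = t * ee * (B2o - B1o + mu2) + t * of_int (e * (k4 - k3 + j2))" unfolding subs ee_def by (simp add: algebra_simps)
  have sE1: "t * (k' - gE' - ee * mu2') = t * (k - gE - ee * mu2) + t * of_int (r5 - r4 - e * j2)" unfolding subs ee_def by (simp add: algebra_simps)
  obtain qE where qE: "lifted_L (t * ee * (B2o' - B1o' + mu2')) (t * (k' - gE' - ee * mu2')) - lifted_L (t * ee * (B2o - B1o + mu2)) (t * (k - gE - ee * mu2))
     = - 2 * pi\<^sup>2 * of_int qE + (((t * (k' - gE' - ee * mu2')) - (t * (k - gE - ee * mu2))) * (t * ee * (B2o - B1o + mu2)) - ((t * ee * (B2o' - B1o' + mu2')) - (t * ee * (B2o - B1o + mu2))) * (t * (k - gE - ee * mu2)))/2"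
    using sh[OF cE sE0 sE1] by blast
  define cN where "cN = ((k' - gN') - (k - gN)) * (B2o - B1) - ((B2o' - B1') - (B2o - B1)) * (k - gN)"
  have AN: "((t * (k' - gN')) - (t * (k - gN))) * (t * ee * (B2o - B1)) - ((t * ee * (B2o' - B1')) - (t * ee * (B2o - B1))) * (t * (k - gN)) = t * t * ee * cN"
    unfolding cN_def by (simp add: algebra_simps)
  define cW where "cW = ((k' - gW' + ee * mu1') - (k - gW + ee * mu1)) * (B2 - B1 - mu1) - ((B2' - B1' - mu1') - (B2 - B1 - mu1)) * (k - gW + ee * mu1)"
  have AW: "((t * (k' - gW' + ee * mu1')) - (t * (k - gW + ee * mu1))) * (t * ee * (B2 - B1 - mu1)) - ((t * ee * (B2' - B1' - mu1')) - (t * ee * (B2 - B1 - mu1))) * (t * (k - gW + ee * mu1)) = t * t * ee * cW"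
    unfolding cW_def by (simp add: algebra_simps)
  define cS where "cS = ((k' - gS' + ee * (mu1' - mu2')) - (k - gS + ee * (mu1 - mu2))) * (B2 - B1o + mu2 - mu1) - ((B2' - B1o' + mu2' - mu1') - (B2 - B1o + mu2 - mu1)) * (k - gS + ee * (mu1 - mu2))"
  have AS: "((t * (k' - gS' + ee * (mu1' - mu2'))) - (t * (k - gS + ee * (mu1 - mu2)))) * (t * ee * (B2 - B1o + mu2 - mu1)) - ((t * ee * (B2' - B1o' + mu2' - mu1')) - (t * ee * (B2 - B1o + mu2 - mu1))) * (t * (k - gS + ee * (mu1 - mu2))) = t * t * ee * cS"
    unfolding cS_def by (simp add: algebra_simps)
  define cE where "cE = ((k' - gE' - ee * mu2') - (k - gE - ee * mu2)) * (B2o - B1o + mu2) - ((B2o' - B1o' + mu2') - (B2o - B1o + mu2)) * (k - gE - ee * mu2)"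
  have AE: "((t * (k' - gE' - ee * mu2')) - (t * (k - gE - ee * mu2))) * (t * ee * (B2o - B1o + mu2)) - ((t * ee * (B2o' - B1o' + mu2')) - (t * ee * (B2o - B1o + mu2))) * (t * (k - gE - ee * mu2)) = t * t * ee * cE"
    unfolding cE_def by (simp add: algebra_simps)
  have core: "cN - cW + cS - cE = Graw ee mu1 mu2 B1 B2 B1o B2o gN gS gW gE mu1' mu2' B1' B2' B1o' B2o' gN' gS' gW' gE'"
    unfolding cN_def cW_def cS_def cE_def by (rule np_core)
  have cv1: "cvnp (of_int e) mu1' mu2' B1' B2' B1o' B2o' gN' gS' gW' gE' k' = - \<i> * ee * (lifted_L (t * ee * (B2o' - B1')) (t * (k' - gN')) - lifted_L (t * ee * (B2' - B1' - mu1')) (t * (k' - gW' + ee * mu1')) + lifted_L (t * ee * (B2' - B1o' + mu2' - mu1')) (t * (k' - gS' + ee * (mu1' - mu2'))) - lifted_L (t * ee * (B2o' - B1o' + mu2')) (t * (k' - gE' - ee * mu2')))"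
    by (simp add: cvnp_def Let_def t_def ee_def)
  have cv0: "cvnp (of_int e) mu1 mu2 B1 B2 B1o B2o gN gS gW gE k = - \<i> * ee * (lifted_L (t * ee * (B2o - B1)) (t * (k - gN)) - lifted_L (t * ee * (B2 - B1 - mu1)) (t * (k - gW + ee * mu1)) + lifted_L (t * ee * (B2 - B1o + mu2 - mu1)) (t * (k - gS + ee * (mu1 - mu2))) - lifted_L (t * ee * (B2o - B1o + mu2)) (t * (k - gE - ee * mu2)))"
    by (simp add: cvnp_def Let_def t_def ee_def)
  have "cvnp (of_int e) mu1' mu2' B1' B2' B1o' B2o' gN' gS' gW' gE' k' - cvnp (of_int e) mu1 mu2 B1 B2 B1o B2o gN gS gW gE k
     = - \<i> * ee * ((lifted_L (t * ee * (B2o' - B1')) (t * (k' - gN')) - lifted_L (t * ee * (B2o - B1)) (t * (k - gN))) - (lifted_L (t * ee * (B2' - B1' - mu1')) (t * (k' - gW' + ee * mu1')) - lifted_L (t * ee * (B2 - B1 - mu1)) (t * (k - gW + ee * mu1))) + (lifted_L (t * ee * (B2' - B1o' + mu2' - mu1')) (t * (k' - gS' + ee * (mu1' - mu2'))) - lifted_L (t * ee * (B2 - B1o + mu2 - mu1)) (t * (k - gS + ee * (mu1 - mu2)))) - (lifted_L (t * ee * (B2o' - B1o' + mu2')) (t * (k' - gE' - ee * mu2')) - lifted_L (t * ee * (B2o - B1o + mu2)) (t * (k - gE - ee * mu2))))"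
    unfolding cv1 cv0 by (simp add: algebra_simps)
  also have "... = - \<i> * ee * (- 2 * pi\<^sup>2 * of_int (qN - qW + qS - qE) + t * t * ee * (cN - cW + cS - cE) / 2)"
    unfolding qN qW qS qE AN AW AS AE by (simp add: field_simps)
  also have "... = - \<i> * ee * (- 2 * pi\<^sup>2 * of_int (qN - qW + qS - qE)) - \<i> * (t * t) * (ee * ee) * Graw ee mu1 mu2 B1 B2 B1o B2o gN gS gW gE mu1' mu2' B1' B2' B1o' B2o' gN' gS' gW' gE' / 2"
    unfolding core[symmetric] by (simp add: field_simps)
  also have "... = 2 * pi\<^sup>2 * \<i> * (Graw ee mu1 mu2 B1 B2 B1o B2o gN gS gW gE mu1' mu2' B1' B2' B1o' B2o' gN' gS' gW' gE' + of_int (e * (qN - qW + qS - qE)))"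
    unfolding t_def ee_def by (simp add: algebra_simps power2_eq_square ee2[unfolded ee_def])
  finally show ?thesis unfolding ee_def by blast
qed
definition cvp :: "complex \<Rightarrow> complex \<Rightarrow> complex \<Rightarrow> complex \<Rightarrow> complex \<Rightarrow> complex \<Rightarrow> complex
   \<Rightarrow> complex \<Rightarrow> complex \<Rightarrow> complex \<Rightarrow> complex \<Rightarrow> complex" where
  "cvp e \<mu>1 \<mu>2 b1 b2 b1' b2' gN gS gW gE = 2 * pi\<^sup>2 * \<i> * Qraw e \<mu>1 \<mu>2 b1 b2 b1' b2' gN gS gW gE"

lemma local_p:
  fixes e :: int and a1 b1 m1 a2 b2 m2 a1o b1o a2o b2o :: complex
    and mu1 mu2 B1 B2 B1o B2o gN gS gW gE mu1' mu2' B1' B2' B1o' B2o' gN' gS' gW' gE' :: complex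
  assumes e: "e = 1 \<or> e = -1"
    and ce: "crossing_eqs e a1 b1 m1 a2 b2 m2 a1o b1o a2o b2o"
    and nz: "a1 \<noteq> 0" "b1 \<noteq> 0" "m1 \<noteq> 0" "a2 \<noteq> 0" "b2 \<noteq> 0" "m2 \<noteq> 0"
       "a1o \<noteq> 0" "b1o \<noteq> 0" "a2o \<noteq> 0" "b2o \<noteq> 0"
    and p: "b2o = b1"
    and f: "exp (2 * pi * \<i> * mu1) = m1" "exp (2 * pi * \<i> * mu2) = m2"
      "exp (2 * pi * \<i> * B1) = b1" "exp (2 * pi * \<i> * B2) = b2"
      "exp (2 * pi * \<i> * B1o) = b1o" "exp (2 * pi * \<i> * B2o) = b2o"
      "exp (2 * pi * \<i> * (gW - gN)) = a1" "exp (2 * pi * \<i> * (gS - gW)) = a2"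
      "exp (2 * pi * \<i> * (gE - gN)) = a2o"
    and f': "exp (2 * pi * \<i> * mu1') = m1" "exp (2 * pi * \<i> * mu2') = m2"
      "exp (2 * pi * \<i> * B1') = b1" "exp (2 * pi * \<i> * B2') = b2"
      "exp (2 * pi * \<i> * B1o') = b1o" "exp (2 * pi * \<i> * B2o') = b2o"
      "exp (2 * pi * \<i> * (gW' - gN')) = a1" "exp (2 * pi * \<i> * (gS' - gW')) = a2"
      "exp (2 * pi * \<i> * (gE' - gN')) = a2o"
  shows "\<exists>n::int. cvp (of_int e) mu1' mu2' B1' B2' B1o' B2o' gN' gS' gW' gE'
      - cvp (of_int e) mu1 mu2 B1 B2 B1o B2o gN gS gW gE
      = 2 * pi\<^sup>2 * \<i> * (Graw (of_int e) mu1 mu2 B1 B2 B1o B2o gN gS gW gE mu1' mu2' B1' B2' B1o' B2o' gN' gS' gW' gE' + of_int n)"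
proof -
  define t :: complex where "t = 2 * pi * \<i>"
  note fT = f[folded t_def] and fT' = f'[folded t_def]
  note eqint = exp_eq_int[folded t_def]
  have eadd: "exp (t * (x + y)) = exp (t * x) * exp (t * y)" for x y
    by (simp add: distrib_left exp_add)
  have pr: "b2 = m1 * b1" "b1o = m2 * b2o" using alg_pinched[OF e ce nz p] by auto
  obtain i1 where i1: "B2 = B1 + mu1 + of_int i1"
    using eqint[of B2 "B1 + mu1"] fT pr by (auto simp: eadd mult_ac)
  obtain i3 where i3: "B2o = B1 + of_int i3" using eqint[of B2o B1] fT p by auto
  obtain i2 where i2: "B1o = B2o + mu2 + of_int i2"
    using eqint[of B1o "B2o + mu2"] fT pr by (auto simp: eadd mult_ac)
  obtain j1 where j1: "mu1' = mu1 + of_int j1" using eqint[of mu1' mu1] fT(1) fT'(1) by auto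
  obtain j2 where j2: "mu2' = mu2 + of_int j2" using eqint[of mu2' mu2] fT(2) fT'(2) by auto
  obtain k1 where k1: "B1' = B1 + of_int k1" using eqint[of B1' B1] fT(3) fT'(3) by auto
  obtain k2 where k2: "B2' = B2 + of_int k2" using eqint[of B2' B2] fT(4) fT'(4) by auto
  obtain k3 where k3: "B1o' = B1o + of_int k3" using eqint[of B1o' B1o] fT(5) fT'(5) by auto
  obtain k4 where k4: "B2o' = B2o + of_int k4" using eqint[of B2o' B2o] fT(6) fT'(6) by auto
  obtain r1 where r1: "gW' - gN' = gW - gN + of_int r1" using eqint[of "gW' - gN'" "gW - gN"] fT(7) fT'(7) by auto
  obtain r2 where r2: "gS' - gW' = gS - gW + of_int r2" using eqint[of "gS' - gW'" "gS - gW"] fT(8) fT'(8) by auto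
  obtain r4 where r4: "gE' - gN' = gE - gN + of_int r4" using eqint[of "gE' - gN'" "gE - gN"] fT(9) fT'(9) by auto
  define dl where "dl = gN' - gN"
  have gN': "gN' = gN + dl" unfolding dl_def by simp
  have gW': "gW' = gW + dl + of_int r1" using r1 unfolding dl_def by (simp add: algebra_simps)
  have gW'': "gW' = gN' + (gW - gN) + of_int r1" using r1 by (simp add: algebra_simps)
  have "gS' = gW' + (gS - gW) + of_int r2" using r2 by (simp add: algebra_simps)
  then have gS': "gS' = gS + dl + of_int (r1 + r2)" unfolding gW'' dl_def by (simp add: algebra_simps)
  have gE': "gE' = gE + dl + of_int r4" using r4 unfolding dl_def by (simp add: algebra_simps)
  note pp = pinched_poly[OF i1 i3 i2 j1 j2 k1 k2 k3 k4 gN' gW' gS' gE', of "of_int e"]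
  define n where "n = 2*r4*i2 - r4*j2 + r4*k3 - r4*k4 + 2*(r1+r2)*i1 - 2*(r1+r2)*i2 - 2*(r1+r2)*i3 - (r1+r2)*j1 + (r1+r2)*j2 + (r1+r2)*k2 - (r1+r2)*k3
       - 2*r1*i1 + r1*j1 + r1*k1 - r1*k2
       + e*(2*i1*j2 + 2*i2*j1 + 2*i3*j1 - 2*i3*j2 - 2*j1*j2 - j1*k1 + j1*k3 + j2*k2 - j2*k4)"
  have "cvp (of_int e) mu1' mu2' B1' B2' B1o' B2o' gN' gS' gW' gE' - cvp (of_int e) mu1 mu2 B1 B2 B1o B2o gN gS gW gE
      = 2 * pi\<^sup>2 * \<i> * (Qraw (of_int e) mu1' mu2' B1' B2' B1o' B2o' gN' gS' gW' gE' - Qraw (of_int e) mu1 mu2 B1 B2 B1o B2o gN gS gW gE)"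
    unfolding cvp_def by (simp add: algebra_simps)
  also have "Qraw (of_int e) mu1' mu2' B1' B2' B1o' B2o' gN' gS' gW' gE' - Qraw (of_int e) mu1 mu2 B1 B2 B1o B2o gN gS gW gE
      = Graw (of_int e) mu1 mu2 B1 B2 B1o B2o gN gS gW gE mu1' mu2' B1' B2' B1o' B2o' gN' gS' gW' gE' + of_int n"
    using pp unfolding n_def by (simp add: algebra_simps)
  finally show ?thesis by blast
qed

definition Gc :: "('c, 's, 'r, 'j) link_diagram \<Rightarrow> ('j \<Rightarrow> complex) \<Rightarrow> ('s \<Rightarrow> complex) \<Rightarrow> ('r \<Rightarrow> complex)
   \<Rightarrow> ('j \<Rightarrow> complex) \<Rightarrow> ('s \<Rightarrow> complex) \<Rightarrow> ('r \<Rightarrow> complex) \<Rightarrow> 'c \<Rightarrow> complex" where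
  "Gc D \<mu> \<beta> \<gamma> \<mu>' \<beta>' \<gamma>' c = Graw (of_int (sgn D c))
     (\<mu> (comp D (s1 D c))) (\<mu> (comp D (s2 D c))) (\<beta> (s1 D c)) (\<beta> (s2 D c)) (\<beta> (s1o D c)) (\<beta> (s2o D c))
     (\<gamma> (rN D c)) (\<gamma> (rS D c)) (\<gamma> (rW D c)) (\<gamma> (rE D c))
     (\<mu>' (comp D (s1 D c))) (\<mu>' (comp D (s2 D c))) (\<beta>' (s1 D c)) (\<beta>' (s2 D c)) (\<beta>' (s1o D c)) (\<beta>' (s2o D c))
     (\<gamma>' (rN D c)) (\<gamma>' (rS D c)) (\<gamma>' (rW D c)) (\<gamma>' (rE D c))"

lemma cv_split:
  "crossing_volume D b \<mu> \<beta> \<gamma> \<kappa> c = (if pinched D b c then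
     cvp (of_int (sgn D c)) (\<mu> (comp D (s1 D c))) (\<mu> (comp D (s2 D c))) (\<beta> (s1 D c)) (\<beta> (s2 D c)) (\<beta> (s1o D c)) (\<beta> (s2o D c))
     (\<gamma> (rN D c)) (\<gamma> (rS D c)) (\<gamma> (rW D c)) (\<gamma> (rE D c))
   else cvnp (of_int (sgn D c)) (\<mu> (comp D (s1 D c))) (\<mu> (comp D (s2 D c))) (\<beta> (s1 D c)) (\<beta> (s2 D c)) (\<beta> (s1o D c)) (\<beta> (s2o D c))
     (\<gamma> (rN D c)) (\<gamma> (rS D c)) (\<gamma> (rW D c)) (\<gamma> (rE D c)) (\<kappa> c))"
  by (simp add: crossing_volume_def cvp_def Qraw_def cvnp_def Let_def)

lemma wf_cross:
  assumes "link_diagram_wf D" "c \<in> crossings D"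
  shows "sgn D c = 1 \<or> sgn D c = -1"
    and "s1 D c \<in> segs D" "s2 D c \<in> segs D" "s1o D c \<in> segs D" "s2o D c \<in> segs D"
    and "comp D (s1 D c) = comp D (s1o D c)" "comp D (s2 D c) = comp D (s2o D c)"
    and "lreg D (s1 D c) = rN D c" "rreg D (s1 D c) = rW D c"
    and "lreg D (s2 D c) = rW D c" "rreg D (s2 D c) = rS D c"
    and "lreg D (s1o D c) = rE D c" "rreg D (s1o D c) = rS D c"
    and "lreg D (s2o D c) = rN D c" "rreg D (s2o D c) = rE D c"
  using assms unfolding link_diagram_wf_def by auto

lemma local_D:
  assumes wf: "link_diagram_wf D" and sh: "shaping D a b m"
    and fl: "flattening D a b m \<mu> \<beta> \<gamma> \<kappa>" and fl': "flattening D a b m \<mu>' \<beta>' \<gamma>' \<kappa>'"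
    and c: "c \<in> crossings D"
  shows "\<exists>n::int. crossing_volume D b \<mu>' \<beta>' \<gamma>' \<kappa>' c - crossing_volume D b \<mu> \<beta> \<gamma> \<kappa> c
     = 2 * pi\<^sup>2 * \<i> * (Gc D \<mu> \<beta> \<gamma> \<mu>' \<beta>' \<gamma>' c + of_int n)"
proof -
  note W = wf_cross[OF wf c]
  have nz0: "\<forall>k\<in>segs D. a k \<noteq> 0 \<and> b k \<noteq> 0 \<and> m k \<noteq> 0" using sh unfolding shaping_def by blast
  have ce: "crossing_eqs (sgn D c)
          (a (s1 D c)) (b (s1 D c)) (m (s1 D c))
          (a (s2 D c)) (b (s2 D c)) (m (s2 D c))
          (a (s1o D c)) (b (s1o D c)) (a (s2o D c)) (b (s2o D c))"
    using sh c unfolding shaping_def by blast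
  have nz: "a (s1 D c) \<noteq> 0" "b (s1 D c) \<noteq> 0" "m (s1 D c) \<noteq> 0" "a (s2 D c) \<noteq> 0" "b (s2 D c) \<noteq> 0" "m (s2 D c) \<noteq> 0"
       "a (s1o D c) \<noteq> 0" "b (s1o D c) \<noteq> 0" "a (s2o D c) \<noteq> 0" "b (s2o D c) \<noteq> 0"
    using nz0 W by auto
  have ff: "exp (2 * pi * \<i> * \<mu>1 (comp D (s1 D c))) = m (s1 D c)"
     "exp (2 * pi * \<i> * \<mu>1 (comp D (s2 D c))) = m (s2 D c)"
     "exp (2 * pi * \<i> * \<beta>1 (s1 D c)) = b (s1 D c)" "exp (2 * pi * \<i> * \<beta>1 (s2 D c)) = b (s2 D c)"
     "exp (2 * pi * \<i> * \<beta>1 (s1o D c)) = b (s1o D c)" "exp (2 * pi * \<i> * \<beta>1 (s2o D c)) = b (s2o D c)"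
     "exp (2 * pi * \<i> * (\<gamma>1 (rW D c) - \<gamma>1 (rN D c))) = a (s1 D c)"
     "exp (2 * pi * \<i> * (\<gamma>1 (rS D c) - \<gamma>1 (rW D c))) = a (s2 D c)"
     "exp (2 * pi * \<i> * (\<gamma>1 (rS D c) - \<gamma>1 (rE D c))) = a (s1o D c)"
     "exp (2 * pi * \<i> * (\<gamma>1 (rE D c) - \<gamma>1 (rN D c))) = a (s2o D c)"
     "\<not> pinched D b c \<Longrightarrow> exp (2 * pi * \<i> * \<kappa>1 c) = exp (2 * pi * \<i> * \<gamma>1 (rN D c)) / (1 - (b (s2o D c) / b (s1 D c)) powi (sgn D c))"
    if F: "flattening D a b m \<mu>1 \<beta>1 \<gamma>1 \<kappa>1" for \<mu>1 \<beta>1 \<gamma>1 \<kappa>1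
  proof -
    have F1: "\<forall>k\<in>segs D. exp (2 * pi * \<i> * \<mu>1 (comp D k)) = m k"
      and F2: "\<forall>k\<in>segs D. exp (2 * pi * \<i> * \<beta>1 k) = b k"
      and F3: "\<forall>k\<in>segs D. exp (2 * pi * \<i> * (\<gamma>1 (rreg D k) - \<gamma>1 (lreg D k))) = a k"
      and F4: "\<forall>c\<in>crossings D. \<not> pinched D b c \<longrightarrow>
        exp (2 * pi * \<i> * \<kappa>1 c) =
          exp (2 * pi * \<i> * \<gamma>1 (rN D c)) / (1 - (b (s2o D c) / b (s1 D c)) powi (sgn D c))"
      using F unfolding flattening_def by blast+
    show "exp (2 * pi * \<i> * \<mu>1 (comp D (s1 D c))) = m (s1 D c)"
     "exp (2 * pi * \<i> * \<mu>1 (comp D (s2 D c))) = m (s2 D c)"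
     "exp (2 * pi * \<i> * \<beta>1 (s1 D c)) = b (s1 D c)" "exp (2 * pi * \<i> * \<beta>1 (s2 D c)) = b (s2 D c)"
     "exp (2 * pi * \<i> * \<beta>1 (s1o D c)) = b (s1o D c)" "exp (2 * pi * \<i> * \<beta>1 (s2o D c)) = b (s2o D c)"
      using F1 F2 W(2-5) by auto
    show "exp (2 * pi * \<i> * (\<gamma>1 (rW D c) - \<gamma>1 (rN D c))) = a (s1 D c)"
      using F3 W(2) W(8,9) by metis
    show "exp (2 * pi * \<i> * (\<gamma>1 (rS D c) - \<gamma>1 (rW D c))) = a (s2 D c)"
      using F3 W(3) W(10,11) by metis
    show "exp (2 * pi * \<i> * (\<gamma>1 (rS D c) - \<gamma>1 (rE D c))) = a (s1o D c)"
      using F3 W(4) W(12,13) by metis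
    show "exp (2 * pi * \<i> * (\<gamma>1 (rE D c) - \<gamma>1 (rN D c))) = a (s2o D c)"
      using F3 W(5) W(14,15) by metis
    show "\<not> pinched D b c \<Longrightarrow> exp (2 * pi * \<i> * \<kappa>1 c) = exp (2 * pi * \<i> * \<gamma>1 (rN D c)) / (1 - (b (s2o D c) / b (s1 D c)) powi (sgn D c))"
      using F4 c by blast
  qed
  note f = ff[OF fl] and f' = ff[OF fl']
  show ?thesis
  proof (cases "pinched D b c")
    case True
    then have p: "b (s2o D c) = b (s1 D c)" unfolding pinched_def .
    show ?thesis unfolding cv_split Gc_def using True
      local_p[OF W(1) ce nz p f(1-7) f(8) f(10) f'(1-7) f'(8) f'(10)] by simp
  next
    case False
    then have p: "b (s2o D c) \<noteq> b (s1 D c)" unfolding pinched_def .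
    show ?thesis unfolding cv_split Gc_def using False
      local_np[OF W(1) ce nz p f(1-10) f(11)[OF False] f'(1-10) f'(11)[OF False]] by simp
  qed
qed

definition Pk :: "('c, 's, 'r, 'j) link_diagram \<Rightarrow> ('r \<Rightarrow> complex) \<Rightarrow> ('r \<Rightarrow> complex) \<Rightarrow> ('s \<Rightarrow> complex) \<Rightarrow> ('s \<Rightarrow> complex) \<Rightarrow> 's \<Rightarrow> complex" where
  "Pk D \<gamma> \<gamma>' \<beta> \<beta>' k = Jf (\<gamma> (lreg D k) - \<gamma> (rreg D k)) (\<gamma>' (lreg D k) - \<gamma>' (rreg D k)) (\<beta> k) (\<beta>' k)"
definition Qk :: "('c, 's, 'r, 'j) link_diagram \<Rightarrow> ('r \<Rightarrow> complex) \<Rightarrow> ('r \<Rightarrow> complex) \<Rightarrow> ('j \<Rightarrow> complex) \<Rightarrow> ('j \<Rightarrow> complex) \<Rightarrow> 's \<Rightarrow> complex" where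
  "Qk D \<gamma> \<gamma>' \<mu> \<mu>' k = Jf (\<gamma> (rreg D k)) (\<gamma>' (rreg D k)) (\<mu> (comp D k)) (\<mu>' (comp D k))"
definition Rk :: "('c, 's, 'r, 'j) link_diagram \<Rightarrow> ('j \<Rightarrow> complex) \<Rightarrow> ('j \<Rightarrow> complex) \<Rightarrow> ('s \<Rightarrow> complex) \<Rightarrow> ('s \<Rightarrow> complex) \<Rightarrow> 's \<Rightarrow> complex" where
  "Rk D \<mu> \<mu>' \<beta> \<beta>' k = Jf (\<mu> (comp D k)) (\<mu>' (comp D k)) (\<beta> k) (\<beta>' k)"
definition ovE :: "('c, 's, 'r, 'j) link_diagram \<Rightarrow> 's \<Rightarrow> complex" where
  "ovE D k = (if over_end D k then 1 else -1)"
definition ovS :: "('c, 's, 'r, 'j) link_diagram \<Rightarrow> 's \<Rightarrow> complex" where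
  "ovS D k = (if over_start D k then 1 else -1)"

lemma wf_inj:
  assumes wf: "link_diagram_wf D" and c: "c \<in> crossings D" and c': "c' \<in> crossings D"
  shows "s1 D c' = s1 D c \<Longrightarrow> c' = c" "s2 D c' = s2 D c \<Longrightarrow> c' = c"
    "s1 D c' \<noteq> s2 D c"
    "s1o D c' = s1o D c \<Longrightarrow> c' = c" "s2o D c' = s2o D c \<Longrightarrow> c' = c"
    "s1o D c' \<noteq> s2o D c"
proof -
  have b1: "inj_on (\<lambda>(c, t). if t then s1 D c else s2 D c) (crossings D \<times> (UNIV :: bool set))"
   and b2: "inj_on (\<lambda>(c, t). if t then s1o D c else s2o D c) (crossings D \<times> (UNIV :: bool set))"
    using wf unfolding link_diagram_wf_def bij_betw_def by blast+
  show "s1 D c' = s1 D c \<Longrightarrow> c' = c" using inj_onD[OF b1, of "(c', True)" "(c, True)"] c c' by auto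
  show "s2 D c' = s2 D c \<Longrightarrow> c' = c" using inj_onD[OF b1, of "(c', False)" "(c, False)"] c c' by auto
  show "s1 D c' \<noteq> s2 D c" using inj_onD[OF b1, of "(c', True)" "(c, False)"] c c' by auto
  show "s1o D c' = s1o D c \<Longrightarrow> c' = c" using inj_onD[OF b2, of "(c', True)" "(c, True)"] c c' by auto
  show "s2o D c' = s2o D c \<Longrightarrow> c' = c" using inj_onD[OF b2, of "(c', False)" "(c, False)"] c c' by auto
  show "s1o D c' \<noteq> s2o D c" using inj_onD[OF b2, of "(c', True)" "(c, False)"] c c' by auto
qed

lemma over_facts:
  assumes wf: "link_diagram_wf D" and c: "c \<in> crossings D"
  shows "over_end D (s1 D c) \<longleftrightarrow> sgn D c = 1" "under_end D (s1 D c) \<longleftrightarrow> sgn D c = -1"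
    "over_end D (s2 D c) \<longleftrightarrow> sgn D c = -1" "under_end D (s2 D c) \<longleftrightarrow> sgn D c = 1"
    "over_start D (s1o D c) \<longleftrightarrow> sgn D c = 1" "under_start D (s1o D c) \<longleftrightarrow> sgn D c = -1"
    "over_start D (s2o D c) \<longleftrightarrow> sgn D c = -1" "under_start D (s2o D c) \<longleftrightarrow> sgn D c = 1"
  unfolding over_end_def under_end_def over_start_def under_start_def
  using c wf_inj[OF wf c] wf_inj[OF wf _ c] by (auto; metis)+

lemma gc_decomp:
  assumes wf: "link_diagram_wf D" and c: "c \<in> crossings D"
  shows "Gc D \<mu> \<beta> \<gamma> \<mu>' \<beta>' \<gamma>' c =
    (Pk D \<gamma> \<gamma>' \<beta> \<beta>' (s1 D c) - Qk D \<gamma> \<gamma>' \<mu> \<mu>' (s1 D c) + ovE D (s1 D c) * Rk D \<mu> \<mu>' \<beta> \<beta>' (s1 D c))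
  + (Pk D \<gamma> \<gamma>' \<beta> \<beta>' (s2 D c) - Qk D \<gamma> \<gamma>' \<mu> \<mu>' (s2 D c) + ovE D (s2 D c) * Rk D \<mu> \<mu>' \<beta> \<beta>' (s2 D c))
  - (Pk D \<gamma> \<gamma>' \<beta> \<beta>' (s1o D c) - Qk D \<gamma> \<gamma>' \<mu> \<mu>' (s1o D c) + ovS D (s1o D c) * Rk D \<mu> \<mu>' \<beta> \<beta>' (s1o D c))
  - (Pk D \<gamma> \<gamma>' \<beta> \<beta>' (s2o D c) - Qk D \<gamma> \<gamma>' \<mu> \<mu>' (s2o D c) + ovS D (s2o D c) * Rk D \<mu> \<mu>' \<beta> \<beta>' (s2o D c))"
proof -
  note W = wf_cross[OF wf c]
  note O = over_facts[OF wf c]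
  have E: "ovE D (s1 D c) = of_int (sgn D c)" "ovE D (s2 D c) = - of_int (sgn D c)"
    "ovS D (s1o D c) = of_int (sgn D c)" "ovS D (s2o D c) = - of_int (sgn D c)"
    using W(1) O unfolding ovE_def ovS_def by auto
  show ?thesis unfolding E Gc_def Graw_def Pk_def Qk_def Rk_def W(6-15)[symmetric]
    by (simp add: W(6-15) Jf_def algebra_simps)
qed

lemma sum_in:
  assumes wf: "link_diagram_wf D"
  shows "(\<Sum>c\<in>crossings D. h (s1 D c) + h (s2 D c)) = (\<Sum>k\<in>segs D. h k)"
proof -
  have b: "bij_betw (\<lambda>(c, t). if t then s1 D c else s2 D c) (crossings D \<times> (UNIV :: bool set)) (segs D)"
    using wf unfolding link_diagram_wf_def by blast
  have "(\<Sum>k\<in>segs D. h k) = (\<Sum>p\<in>crossings D \<times> (UNIV :: bool set). h ((\<lambda>(c, t). if t then s1 D c else s2 D c) p))"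
    using sum.reindex_bij_betw[OF b, of h] by simp
  also have "... = (\<Sum>c\<in>crossings D. \<Sum>t\<in>(UNIV :: bool set). h (if t then s1 D c else s2 D c))"
    by (simp add: sum.cartesian_product case_prod_beta)
  also have "... = (\<Sum>c\<in>crossings D. h (s1 D c) + h (s2 D c))"
    by (simp add: UNIV_bool add.commute)
  finally show ?thesis by simp
qed

lemma sum_out:
  assumes wf: "link_diagram_wf D"
  shows "(\<Sum>c\<in>crossings D. h (s1o D c) + h (s2o D c)) = (\<Sum>k\<in>segs D. h k)"
proof -
  have b: "bij_betw (\<lambda>(c, t). if t then s1o D c else s2o D c) (crossings D \<times> (UNIV :: bool set)) (segs D)"
    using wf unfolding link_diagram_wf_def by blast
  have "(\<Sum>k\<in>segs D. h k) = (\<Sum>p\<in>crossings D \<times> (UNIV :: bool set). h ((\<lambda>(c, t). if t then s1o D c else s2o D c) p))"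
    using sum.reindex_bij_betw[OF b, of h] by simp
  also have "... = (\<Sum>c\<in>crossings D. \<Sum>t\<in>(UNIV :: bool set). h (if t then s1o D c else s2o D c))"
    by (simp add: sum.cartesian_product case_prod_beta)
  also have "... = (\<Sum>c\<in>crossings D. h (s1o D c) + h (s2o D c))"
    by (simp add: UNIV_bool add.commute)
  finally show ?thesis by simp
qed

lemma eta_ov:
  assumes wf: "link_diagram_wf D" and k: "k \<in> segs D"
  shows "ovE D k - ovS D k = - 2 * of_int (eta D k)"
proof -
  have b1: "bij_betw (\<lambda>(c, t). if t then s1 D c else s2 D c) (crossings D \<times> (UNIV :: bool set)) (segs D)"
    using wf unfolding link_diagram_wf_def by blast
  have b2: "bij_betw (\<lambda>(c, t). if t then s1o D c else s2o D c) (crossings D \<times> (UNIV :: bool set)) (segs D)"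
    using wf unfolding link_diagram_wf_def by blast
  obtain p where p: "p \<in> crossings D \<times> (UNIV :: bool set)" "(\<lambda>(c, t). if t then s1 D c else s2 D c) p = k"
    using b1 k unfolding bij_betw_def by (metis (no_types, lifting) imageE)
  obtain q where q: "q \<in> crossings D \<times> (UNIV :: bool set)" "(\<lambda>(c, t). if t then s1o D c else s2o D c) q = k"
    using b2 k unfolding bij_betw_def by (metis (no_types, lifting) imageE)
  obtain c t where c: "c \<in> crossings D" and kc: "k = (if t then s1 D c else s2 D c)" using p by auto
  obtain c' t' where c': "c' \<in> crossings D" and kc': "k = (if t' then s1o D c' else s2o D c')" using q by auto
  have ue: "under_end D k \<longleftrightarrow> \<not> over_end D k"
  proof (cases t)
    case True
    then have "k = s1 D c" using kc by simp
    then show ?thesis using over_facts[OF wf c] wf_cross(1)[OF wf c] by auto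
  next
    case False
    then have "k = s2 D c" using kc by simp
    then show ?thesis using over_facts[OF wf c] wf_cross(1)[OF wf c] by auto
  qed
  have us: "under_start D k \<longleftrightarrow> \<not> over_start D k"
  proof (cases t')
    case True
    then have "k = s1o D c'" using kc' by simp
    then show ?thesis using over_facts[OF wf c'] wf_cross(1)[OF wf c'] by auto
  next
    case False
    then have "k = s2o D c'" using kc' by simp
    then show ?thesis using over_facts[OF wf c'] wf_cross(1)[OF wf c'] by auto
  qed
  show ?thesis unfolding ovE_def ovS_def eta_def using ue us by auto
qed

lemma global_sum:
  assumes wf: "link_diagram_wf D"
  shows "(\<Sum>c\<in>crossings D. Gc D \<mu> \<beta> \<gamma> \<mu>' \<beta>' \<gamma>' c) =
     2 * (\<Sum>k\<in>segs D. of_int (eta D k) * ((\<beta>' k - \<beta> k) * \<mu> (comp D k) - (\<mu>' (comp D k) - \<mu> (comp D k)) * \<beta> k))"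
proof -
  define HE where "HE k = Pk D \<gamma> \<gamma>' \<beta> \<beta>' k - Qk D \<gamma> \<gamma>' \<mu> \<mu>' k + ovE D k * Rk D \<mu> \<mu>' \<beta> \<beta>' k" for k
  define HS where "HS k = Pk D \<gamma> \<gamma>' \<beta> \<beta>' k - Qk D \<gamma> \<gamma>' \<mu> \<mu>' k + ovS D k * Rk D \<mu> \<mu>' \<beta> \<beta>' k" for k
  have "(\<Sum>c\<in>crossings D. Gc D \<mu> \<beta> \<gamma> \<mu>' \<beta>' \<gamma>' c) =
      (\<Sum>c\<in>crossings D. (HE (s1 D c) + HE (s2 D c)) - (HS (s1o D c) + HS (s2o D c)))"
    by (rule sum.cong) (simp_all add: gc_decomp[OF wf] HE_def HS_def)
  also have "... = (\<Sum>k\<in>segs D. HE k) - (\<Sum>k\<in>segs D. HS k)"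
    by (simp add: sum_subtractf sum_in[OF wf] sum_out[OF wf])
  also have "... = (\<Sum>k\<in>segs D. (ovE D k - ovS D k) * Rk D \<mu> \<mu>' \<beta> \<beta>' k)"
    by (simp add: sum_subtractf[symmetric] HE_def HS_def algebra_simps)
  also have "... = (\<Sum>k\<in>segs D. 2 * (of_int (eta D k) * ((\<beta>' k - \<beta> k) * \<mu> (comp D k) - (\<mu>' (comp D k) - \<mu> (comp D k)) * \<beta> k)))"
    by (rule sum.cong) (simp_all add: eta_ov[OF wf] Rk_def Jf_def algebra_simps)
  finally show ?thesis by (simp add: sum_distrib_left)
qed

lemma rhs_sum:
  assumes wf: "link_diagram_wf D"
  shows "(\<Sum>j\<in>comps D.
                 (logdec_lon D \<mu>' \<beta>' j - logdec_lon D \<mu> \<beta> j) * logdec_mer \<mu> j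
                 - (logdec_mer \<mu>' j - logdec_mer \<mu> j) * logdec_lon D \<mu> \<beta> j)
    = (\<Sum>k\<in>segs D. of_int (eta D k) * ((\<beta>' k - \<beta> k) * \<mu> (comp D k) - (\<mu>' (comp D k) - \<mu> (comp D k)) * \<beta> k))"
proof -
  have fin: "finite (segs D)" and cs: "comps D = comp D ` segs D"
    using wf unfolding link_diagram_wf_def by blast+
  define g where "g k = of_int (eta D k) * ((\<beta>' k - \<beta> k) * \<mu> (comp D k) - (\<mu>' (comp D k) - \<mu> (comp D k)) * \<beta> k)" for k
  have per: "(logdec_lon D \<mu>' \<beta>' j - logdec_lon D \<mu> \<beta> j) * logdec_mer \<mu> j
                 - (logdec_mer \<mu>' j - logdec_mer \<mu> j) * logdec_lon D \<mu> \<beta> j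
        = (\<Sum>k\<in>{k\<in>segs D. comp D k = j}. g k)" for j
  proof -
    define A where "A = {k\<in>segs D. comp D k = j}"
    have "(\<Sum>k\<in>A. g k) = (\<Sum>k\<in>A. of_int (eta D k) * ((\<beta>' k - \<beta> k) * \<mu> j - (\<mu>' j - \<mu> j) * \<beta> k))"
      unfolding A_def g_def by (rule sum.cong) auto
    also have "... = ((\<Sum>k\<in>A. of_int (eta D k) * \<beta>' k) - (\<Sum>k\<in>A. of_int (eta D k) * \<beta> k)) * \<mu> j
        - (\<mu>' j - \<mu> j) * (\<Sum>k\<in>A. of_int (eta D k) * \<beta> k)"
      by (simp add: sum_distrib_left sum_distrib_right sum_subtractf[symmetric] algebra_simps)
    finally show ?thesis unfolding logdec_lon_def logdec_mer_def A_def[symmetric]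
      by (simp add: algebra_simps)
  qed
  have "(\<Sum>k\<in>segs D. g k) = (\<Sum>j\<in>comp D ` segs D. \<Sum>k\<in>{x. x \<in> segs D \<and> comp D x = j}. g k)"
    by (rule sum.image_gen[OF fin])
  then show ?thesis unfolding per cs g_def by simp
qed

theorem theorem3p2:
  fixes D :: "('c, 's, 'r, 'j) link_diagram"
    and a b m :: "'s \<Rightarrow> complex"
    and \<mu> \<mu>' :: "'j \<Rightarrow> complex" and \<beta> \<beta>' :: "'s \<Rightarrow> complex"
    and \<gamma> \<gamma>' :: "'r \<Rightarrow> complex" and \<kappa> \<kappa>' :: "'c \<Rightarrow> complex"
  assumes "link_diagram_wf D"
    and "shaping D a b m"
    and "flattening D a b m \<mu> \<beta> \<gamma> \<kappa>"
    and "flattening D a b m \<mu>' \<beta>' \<gamma>' \<kappa>'"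
  shows "cong_2pi2i
           (diagram_volume D b \<mu>' \<beta>' \<gamma>' \<kappa>' - diagram_volume D b \<mu> \<beta> \<gamma> \<kappa>)
           (4 * pi\<^sup>2 * \<i> *
              (\<Sum>j\<in>comps D.
                 (logdec_lon D \<mu>' \<beta>' j - logdec_lon D \<mu> \<beta> j) * logdec_mer \<mu> j
                 - (logdec_mer \<mu>' j - logdec_mer \<mu> j) * logdec_lon D \<mu> \<beta> j))"
proof -
  note wf = assms(1)
  have "\<forall>c\<in>crossings D. \<exists>n::int. crossing_volume D b \<mu>' \<beta>' \<gamma>' \<kappa>' c - crossing_volume D b \<mu> \<beta> \<gamma> \<kappa> c
     = 2 * pi\<^sup>2 * \<i> * (Gc D \<mu> \<beta> \<gamma> \<mu>' \<beta>' \<gamma>' c + of_int n)"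
    using local_D[OF assms] by blast
  then have "\<exists>N. \<forall>c\<in>crossings D. crossing_volume D b \<mu>' \<beta>' \<gamma>' \<kappa>' c - crossing_volume D b \<mu> \<beta> \<gamma> \<kappa> c
     = 2 * pi\<^sup>2 * \<i> * (Gc D \<mu> \<beta> \<gamma> \<mu>' \<beta>' \<gamma>' c + of_int (N c))"
    by (rule bchoice)
  then obtain N where N: "\<forall>c\<in>crossings D. crossing_volume D b \<mu>' \<beta>' \<gamma>' \<kappa>' c - crossing_volume D b \<mu> \<beta> \<gamma> \<kappa> c
     = 2 * pi\<^sup>2 * \<i> * (Gc D \<mu> \<beta> \<gamma> \<mu>' \<beta>' \<gamma>' c + of_int (N c))"
    by blast
  define T where "T = (\<Sum>k\<in>segs D. of_int (eta D k) * ((\<beta>' k - \<beta> k) * \<mu> (comp D k) - (\<mu>' (comp D k) - \<mu> (comp D k)) * \<beta> k))"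
  have "diagram_volume D b \<mu>' \<beta>' \<gamma>' \<kappa>' - diagram_volume D b \<mu> \<beta> \<gamma> \<kappa>
      = (\<Sum>c\<in>crossings D. 2 * pi\<^sup>2 * \<i> * (Gc D \<mu> \<beta> \<gamma> \<mu>' \<beta>' \<gamma>' c + of_int (N c)))"
    unfolding diagram_volume_def sum_subtractf[symmetric] by (rule sum.cong) (simp_all add: N[rule_format])
  also have "... = 2 * pi\<^sup>2 * \<i> * ((\<Sum>c\<in>crossings D. Gc D \<mu> \<beta> \<gamma> \<mu>' \<beta>' \<gamma>' c) + of_int (\<Sum>c\<in>crossings D. N c))"
    by (simp only: sum_distrib_left[symmetric] sum.distrib of_int_sum)
  also have "... = 2 * pi\<^sup>2 * \<i> * (2 * T + of_int (\<Sum>c\<in>crossings D. N c))"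
    unfolding global_sum[OF wf] T_def ..
  finally have L: "diagram_volume D b \<mu>' \<beta>' \<gamma>' \<kappa>' - diagram_volume D b \<mu> \<beta> \<gamma> \<kappa>
      = 2 * pi\<^sup>2 * \<i> * (2 * T + of_int (\<Sum>c\<in>crossings D. N c))" .
  have "diagram_volume D b \<mu>' \<beta>' \<gamma>' \<kappa>' - diagram_volume D b \<mu> \<beta> \<gamma> \<kappa> - 4 * pi\<^sup>2 * \<i> * T
     = 2 * pi\<^sup>2 * \<i> * of_int (\<Sum>c\<in>crossings D. N c)"
    unfolding L by (simp add: algebra_simps)
  then show ?thesis unfolding cong_2pi2i_def rhs_sum[OF wf] T_def[symmetric] by (rule exI)
qed

end
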